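(* Let $(M,g)$ be a spherically symmetric spacetime and let $V\subset M$ be a region covered by comoving coordinates $(t,R,\theta,\psi)$ with $0\le t<T$ and $0\le R<R_b$, for some $T\in(0,+\infty]$ and $R_b>0$, in which \[ g=-e^{2\Phi}\,dt^2+e^{2\Psi}\,dR^2+r^2\,d\Omega^2,\qquad u=e^{-\Phi}\partial_t, \] where $\Phi,\Psi,r$ are functions of $(t,R)$ and $d\Omega^2=d\theta^2+\sin^2\theta\, d\psi^2$. Assume the coordinates are normalized so that $\Phi(t,R_b)=0$ and $r(0,R)=R$. Let $\sigma>0$ be a constant and let $(g,\rho,n,u,\phi)$ be a spherically symmetric solution on $V$ of the following system describing a pressureless fluid (dust, $p=0$) with energy density $\rho$, particle number density $n$ and four-velocity $u$, together with a scalar field $\phi$: \[ \nabla_\mu(\rho u^\mu)=\sigma n,\qquad \rho\, u^\mu\nabla_\mu u^\nu=0,\qquad \nabla_\mu(n u^\mu)=0, \] \[ R_{\mu\nu}-\tfrac12 g_{\mu\nu}\mathcal R+\phi\, g_{\mu\nu}=T_{\mu\nu},\qquad \nabla_\nu\phi=\sigma J_\nu, \] where $T^{\mu\nu}=\rho u^\mu u^\nu$, $J^\mu=n u^\mu$, $R_{\mu\nu}$ is the Ricci tensor and $\mathcal R$ the scalar curvature of $g$ (units $8\pi G=c=1$). Assume $\rho$ and $n$ are nowhere vanishing on $V$. Then $\rho$, $n$ and $\phi$ are functions of $t\in[0,T)$ only, and there exist a positive function $a:[0,T)\to(0,\infty)$ and a constant $k\in\mathbb R$ such that on $V$ \[ g=-dt^2+a(t)^2\Big(\frac{dR^2}{1-kR^2}+R^2d\Omega^2\Big),\qquad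 u=\partial_t. \]
   Context: The fluid is a perfect fluid with zero pressure; the system above is the projection (along $u$ and orthogonal to $u$) of the diffusion equation $\nabla_\mu T^{\mu\nu}=\sigma J^\nu$ with $p=0$, together with particle number conservation, the Einstein equations with the scalar field $\phi$ (whose energy-momentum tensor is $-\phi g_{\mu\nu}$), and the scalar field equation. Comoving coordinates are coordinates in which the fluid four-velocity is proportional to $\partial_t$; the center of symmetry is $r=0$. *)

theory Defs
  imports "HOL-Analysis.Analysis"
begin

text \<open>Points of the coordinate chart are represented as functions nat => real;
  only the components 0..3 = (t, R, theta, psi) are used.\<close>

type_synonym pt = "nat \<Rightarrow> real"
type_synonym metric = "pt \<Rightarrow> nat \<Rightarrow> nat \<Rightarrow> real"
type_synonym vfield = "pt \<Rightarrow> nat \<Rightarrow> real"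

definition pd :: "nat \<Rightarrow> (pt \<Rightarrow> real) \<Rightarrow> pt \<Rightarrow> real" where
  "pd i F x = deriv (\<lambda>s. F (x(i := s))) (x i)"

definition dt :: "(real \<Rightarrow> real \<Rightarrow> real) \<Rightarrow> real \<Rightarrow> real \<Rightarrow> real" where
  "dt f = (\<lambda>t R. deriv (\<lambda>s. f s R) t)"
definition dR :: "(real \<Rightarrow> real \<Rightarrow> real) \<Rightarrow> real \<Rightarrow> real \<Rightarrow> real" where
  "dR f = (\<lambda>t R. deriv (\<lambda>s. f t s) R)"

fun Ck :: "nat \<Rightarrow> (real \<times> real) set \<Rightarrow> (real \<Rightarrow> real \<Rightarrow> real) \<Rightarrow> bool" where
  "Ck 0 S f = continuous_on S (\<lambda>(t,R). f t R)"
| "Ck (Suc k) S f = (continuous_on S (\<lambda>(t,R). f t R) \<and>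
      (\<forall>(t,R)\<in>S. (\<lambda>s. f s R) differentiable (at t) \<and> (\<lambda>s. f t s) differentiable (at R)) \<and>
      Ck k S (dt f) \<and> Ck k S (dR f))"

definition smooth2 :: "(real \<times> real) set \<Rightarrow> (real \<Rightarrow> real \<Rightarrow> real) \<Rightarrow> bool" where
  "smooth2 S f = (\<forall>k. Ck k S f)"

definition sph_metric :: "(real \<Rightarrow> real \<Rightarrow> real) \<Rightarrow> (real \<Rightarrow> real \<Rightarrow> real) \<Rightarrow>
    (real \<Rightarrow> real \<Rightarrow> real) \<Rightarrow> metric" where
  "sph_metric \<Phi> \<Psi> r x i j =
     (if i \<noteq> j then 0
      else if i = 0 then - exp (2 * \<Phi> (x 0) (x 1))
      else if i = 1 then exp (2 * \<Psi> (x 0) (x 1))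
      else if i = 2 then (r (x 0) (x 1))\<^sup>2
      else if i = 3 then (r (x 0) (x 1))\<^sup>2 * (sin (x 2))\<^sup>2
      else 0)"

definition frw_metric :: "(real \<Rightarrow> real) \<Rightarrow> real \<Rightarrow> metric" where
  "frw_metric a k x i j =
     (if i \<noteq> j then 0
      else if i = 0 then -1
      else if i = 1 then (a (x 0))\<^sup>2 / (1 - k * (x 1)\<^sup>2)
      else if i = 2 then (a (x 0))\<^sup>2 * (x 1)\<^sup>2
      else if i = 3 then (a (x 0))\<^sup>2 * (x 1)\<^sup>2 * (sin (x 2))\<^sup>2
      else 0)"

text \<open>Inverse of a diagonal metric (the metrics above are diagonal).\<close>
definition diag_inv :: "metric \<Rightarrow> metric" where
  "diag_inv g x i j = (if i = j then 1 / g x i i else 0)"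

definition christoffel :: "metric \<Rightarrow> pt \<Rightarrow> nat \<Rightarrow> nat \<Rightarrow> nat \<Rightarrow> real" where
  "christoffel g x a b c = (1/2) * (\<Sum>d<4. diag_inv g x a d *
      (pd b (\<lambda>y. g y d c) x + pd c (\<lambda>y. g y d b) x - pd d (\<lambda>y. g y b c) x))"

definition ricci :: "metric \<Rightarrow> pt \<Rightarrow> nat \<Rightarrow> nat \<Rightarrow> real" where
  "ricci g x b c = (\<Sum>a<4. pd a (\<lambda>y. christoffel g y a b c) x
      - pd c (\<lambda>y. christoffel g y a a b) x
      + (\<Sum>d<4. christoffel g x a a d * christoffel g x d b c
               - christoffel g x a c d * christoffel g x d a b))"

definition scalar_curv :: "metric \<Rightarrow> pt \<Rightarrow> real" where
  "scalar_curv g x = (\<Sum>b<4. \<Sum>c<4. diag_inv g x b c * ricci g x b c)"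

definition divergence :: "metric \<Rightarrow> vfield \<Rightarrow> pt \<Rightarrow> real" where
  "divergence g W x = (\<Sum>m<4. pd m (\<lambda>y. W y m) x)
      + (\<Sum>m<4. \<Sum>l<4. christoffel g x m m l * W x l)"

definition cov_deriv :: "metric \<Rightarrow> vfield \<Rightarrow> pt \<Rightarrow> nat \<Rightarrow> nat \<Rightarrow> real" where
  "cov_deriv g W x m \<nu> = pd m (\<lambda>y. W y \<nu>) x + (\<Sum>l<4. christoffel g x \<nu> m l * W x l)"

definition lower :: "metric \<Rightarrow> vfield \<Rightarrow> pt \<Rightarrow> nat \<Rightarrow> real" where
  "lower g W x m = (\<Sum>a<4. g x m a * W x a)"

definition lift :: "(real \<Rightarrow> real \<Rightarrow> real) \<Rightarrow> pt \<Rightarrow> real" where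
  "lift f x = f (x 0) (x 1)"

end

theory Submission
  imports Defs
begin

lemma Ck_dt: "Ck (Suc k) S f \<Longrightarrow> Ck k S (dt f)" by simp
lemma Ck_dR: "Ck (Suc k) S f \<Longrightarrow> Ck k S (dR f)" by simp

lemma smooth2_dt: "smooth2 S f \<Longrightarrow> smooth2 S (dt f)"
  unfolding smooth2_def by (metis Ck_dt)
lemma smooth2_dR: "smooth2 S f \<Longrightarrow> smooth2 S (dR f)"
  unfolding smooth2_def by (metis Ck_dR)
lemma smooth2_cont: "smooth2 S f \<Longrightarrow> continuous_on S (\<lambda>(t,R). f t R)"
  unfolding smooth2_def by (metis Ck.simps(1))

lemma smooth2_hdt: assumes "smooth2 S f" "(t,R) \<in> S"
  shows "((\<lambda>s. f s R) has_real_derivative dt f t R) (at t)"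
proof -
  have "Ck (Suc 0) S f" using assms(1) unfolding smooth2_def by blast
  then have "(\<lambda>s. f s R) differentiable (at t)" using assms(2) by auto
  then show ?thesis unfolding dt_def using DERIV_deriv_iff_real_differentiable by blast
qed

lemma smooth2_hdR: assumes "smooth2 S f" "(t,R) \<in> S"
  shows "((\<lambda>s. f t s) has_real_derivative dR f t R) (at R)"
proof -
  have "Ck (Suc 0) S f" using assms(1) unfolding smooth2_def by blast
  then have "(\<lambda>s. f t s) differentiable (at R)" using assms(2) by auto
  then show ?thesis unfolding dR_def using DERIV_deriv_iff_real_differentiable by blast
qed

lemma pd0_2: "pd 0 (\<lambda>y. h (y 0) (y 1)) x = dt h (x 0) (x 1)"
  by (simp add: pd_def dt_def)
lemma pd1_2: "pd (Suc 0) (\<lambda>y. h (y 0) (y 1)) x = dR h (x 0) (x 1)"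
  by (simp add: pd_def dR_def)
lemma pdi_2: "i \<noteq> 0 \<Longrightarrow> i \<noteq> 1 \<Longrightarrow> pd i (\<lambda>y. h (y 0) (y 1)) x = 0"
  by (simp add: pd_def)
lemma pd_const: "pd i (\<lambda>y. c) x = 0"
  by (simp add: pd_def)

definition UU :: "ereal \<Rightarrow> real \<Rightarrow> pt set" where
  "UU T Rb = {y. 0 < y 0 \<and> ereal (y 0) < T \<and> 0 < y 1 \<and> y 1 < Rb \<and> 0 < y 2 \<and> y 2 < pi}"

lemma ereal_open_lt: "open {s::real. ereal s < T}"
proof -
  have "{s::real. ereal s < T} = ereal -` {..<T}" by auto
  moreover have "continuous_on UNIV ereal" by (intro continuous_intros)
  ultimately show ?thesis
    by (metis open_lessThan open_vimage continuous_on_open_vimage open_UNIV vimage_UNIV Int_UNIV_right Int_commute)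
qed

lemma UU_ev: assumes "x \<in> UU T Rb"
  shows "eventually (\<lambda>s. x(i := s) \<in> UU T Rb) (nhds (x i))"
proof -
  consider "i = 0" | "i = 1" | "i = 2" | "i \<noteq> 0 \<and> i \<noteq> 1 \<and> i \<noteq> 2" by blast
  then show ?thesis
  proof cases
    case 1
    have o: "open ({0<..} \<inter> {s::real. ereal s < T})"
      by (intro open_Int open_greaterThan ereal_open_lt)
    have "x i \<in> {0<..} \<inter> {s::real. ereal s < T}" using assms 1 by (auto simp: UU_def)
    from eventually_nhds_in_open[OF o this] show ?thesis
      by eventually_elim (use assms 1 in \<open>auto simp: UU_def\<close>)
  next
    case 2
    have o: "open {0<..<Rb}" by simp
    have "x i \<in> {0<..<Rb}" using assms 2 by (auto simp: UU_def)
    from eventually_nhds_in_open[OF o this] show ?thesis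
      by eventually_elim (use assms 2 in \<open>auto simp: UU_def\<close>)
  next
    case 3
    have o: "open {0<..<pi}" by simp
    have "x i \<in> {0<..<pi}" using assms 3 by (auto simp: UU_def)
    from eventually_nhds_in_open[OF o this] show ?thesis
      by eventually_elim (use assms 3 in \<open>auto simp: UU_def\<close>)
  next
    case 4
    then show ?thesis using assms by (auto simp: UU_def)
  qed
qed

lemma pd_cong_UU: assumes "x \<in> UU T Rb" "\<And>y. y \<in> UU T Rb \<Longrightarrow> F y = G y"
  shows "pd i F x = pd i G x"
  unfolding pd_def
  by (rule deriv_cong_ev[OF _ refl]) (use UU_ev[OF assms(1), of i] assms(2) in \<open>auto elim: eventually_mono\<close>)


lemma sum4: "(\<Sum>d<(4::nat). F d) = F 0 + F 1 + F 2 + (F 3 :: real)"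
  by (simp add: eval_nat_numeral)

lemma chr_diag:
  assumes diag: "\<And>y i j. i \<noteq> j \<Longrightarrow> G y i j = 0" and a4: "a < 4"
  shows "christoffel G x a b c = (1/2) * (1 / G x a a) *
     ((if a = c then pd b (\<lambda>y. G y a a) x else 0) + (if a = b then pd c (\<lambda>y. G y a a) x else 0)
      - (if b = c then pd a (\<lambda>y. G y b b) x else 0))"
proof -
  have off: "pd k (\<lambda>y. G y i j) x = 0" if "i \<noteq> j" for k i j
  proof -
    have "(\<lambda>y. G y i j) = (\<lambda>y. 0)" using diag that by auto
    then show ?thesis by (simp add: pd_const)
  qed
  have "christoffel G x a b c = (1/2) * ((1 / G x a a) *
      (pd b (\<lambda>y. G y a c) x + pd c (\<lambda>y. G y a b) x - pd a (\<lambda>y. G y b c) x))"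
  proof -
    have "a = 0 \<or> a = 1 \<or> a = 2 \<or> a = 3" using a4 by arith
    then show ?thesis unfolding christoffel_def diag_inv_def sum4
      by (elim disjE) (simp_all add: field_simps)
  qed
  also have "\<dots> = (1/2) * (1 / G x a a) *
     ((if a = c then pd b (\<lambda>y. G y a a) x else 0) + (if a = b then pd c (\<lambda>y. G y a a) x else 0)
      - (if b = c then pd a (\<lambda>y. G y b b) x else 0))"
    by (cases "a = c"; cases "a = b"; cases "b = c") (auto simp: off)
  finally show ?thesis .
qed

definition I2 :: "ereal \<Rightarrow> real \<Rightarrow> (real \<times> real) set" where
  "I2 T Rb = {(t,R). 0 < t \<and> ereal t < T \<and> 0 < R \<and> R < Rb}"

lemma UU_I2: "y \<in> UU T Rb \<Longrightarrow> (y 0, y 1) \<in> I2 T Rb"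
  by (simp add: UU_def I2_def)

locale sph =
  fixes \<Psi> r :: "real \<Rightarrow> real \<Rightarrow> real" and T :: ereal and Rb :: real
  assumes sPsi: "smooth2 (I2 T Rb) \<Psi>" and sr: "smooth2 (I2 T Rb) r"
    and rpos: "\<And>t R. (t,R) \<in> I2 T Rb \<Longrightarrow> 0 < r t R"
begin

abbreviation "g0 \<equiv> sph_metric (\<lambda>_ _. 0) \<Psi> r"

lemma g0_diag: "i \<noteq> j \<Longrightarrow> g0 y i j = 0" by (simp add: sph_metric_def)

lemma hdt: "smooth2 (I2 T Rb) f \<Longrightarrow> (t,R) \<in> I2 T Rb \<Longrightarrow> ((\<lambda>s. f s R) has_real_derivative dt f t R) (at t)"
  by (rule smooth2_hdt)
lemma hdR: "smooth2 (I2 T Rb) f \<Longrightarrow> (t,R) \<in> I2 T Rb \<Longrightarrow> ((\<lambda>s. f t s) has_real_derivative dR f t R) (at R)"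
  by (rule smooth2_hdR)

lemmas sm = sPsi sr smooth2_dt[OF sPsi] smooth2_dR[OF sPsi] smooth2_dt[OF sr] smooth2_dR[OF sr]
   smooth2_dt[OF smooth2_dt[OF sr]] smooth2_dR[OF smooth2_dR[OF sr]]  smooth2_dR[OF smooth2_dt[OF sr]]
   smooth2_dt[OF smooth2_dt[OF sPsi]] smooth2_dR[OF smooth2_dR[OF sPsi]]

lemma UUI: "y \<in> UU T Rb \<Longrightarrow> (y 0, y (Suc 0)) \<in> I2 T Rb"
  using UU_I2 by simp

lemma dg1_0: "y \<in> UU T Rb \<Longrightarrow> deriv (\<lambda>s. exp (2 * \<Psi> s (y (Suc 0)))) (y 0) = 2 * dt \<Psi> (y 0) (y (Suc 0)) * exp (2 * \<Psi> (y 0) (y (Suc 0)))"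
  by (rule DERIV_imp_deriv) (auto intro!: derivative_eq_intros hdt[OF sPsi] UUI)
lemma dg1_1: "y \<in> UU T Rb \<Longrightarrow> deriv (\<lambda>s. exp (2 * \<Psi> (y 0) s)) (y (Suc 0)) = 2 * dR \<Psi> (y 0) (y (Suc 0)) * exp (2 * \<Psi> (y 0) (y (Suc 0)))"
  by (rule DERIV_imp_deriv) (auto intro!: derivative_eq_intros hdR[OF sPsi] UUI)
lemma dg2_0: "y \<in> UU T Rb \<Longrightarrow> deriv (\<lambda>s. (r s (y (Suc 0)))\<^sup>2) (y 0) = 2 * r (y 0) (y (Suc 0)) * dt r (y 0) (y (Suc 0))"
  by (rule DERIV_imp_deriv) (auto intro!: derivative_eq_intros hdt[OF sr] UUI)
lemma dg2_1: "y \<in> UU T Rb \<Longrightarrow> deriv (\<lambda>s. (r (y 0) s)\<^sup>2) (y (Suc 0)) = 2 * r (y 0) (y (Suc 0)) * dR r (y 0) (y (Suc 0))"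
  by (rule DERIV_imp_deriv) (auto intro!: derivative_eq_intros hdR[OF sr] UUI)
lemma dg3_0: "y \<in> UU T Rb \<Longrightarrow> deriv (\<lambda>s. (r s (y (Suc 0)))\<^sup>2 * (sin (y 2))\<^sup>2) (y 0) = 2 * r (y 0) (y (Suc 0)) * dt r (y 0) (y (Suc 0)) * (sin (y 2))\<^sup>2"
  by (rule DERIV_imp_deriv) (auto intro!: derivative_eq_intros hdt[OF sr] UUI)
lemma dg3_1: "y \<in> UU T Rb \<Longrightarrow> deriv (\<lambda>s. (r (y 0) s)\<^sup>2 * (sin (y 2))\<^sup>2) (y (Suc 0)) = 2 * r (y 0) (y (Suc 0)) * dR r (y 0) (y (Suc 0)) * (sin (y 2))\<^sup>2"
  by (rule DERIV_imp_deriv) (auto intro!: derivative_eq_intros hdR[OF sr] UUI)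
lemma dg3_2: "deriv (\<lambda>s. (r (y 0) (y (Suc 0)))\<^sup>2 * (sin s)\<^sup>2) (y 2) = (r (y 0) (y (Suc 0)))\<^sup>2 * (2 * sin (y 2) * cos (y 2))"
  by (rule DERIV_imp_deriv) (auto intro!: derivative_eq_intros)

lemmas dgs = dg1_0 dg1_1 dg2_0 dg2_1 dg3_0 dg3_1 dg3_2

definition chrE :: "nat \<Rightarrow> nat \<Rightarrow> nat \<Rightarrow> pt \<Rightarrow> real" where
"chrE a b c y = (
 if a = 0 then (if b = 1 \<and> c = 1 then dt \<Psi> (y 0) (y 1) * exp (2 * \<Psi> (y 0) (y 1))
   else if b = 2 \<and> c = 2 then r (y 0) (y 1) * dt r (y 0) (y 1)
   else if b = 3 \<and> c = 3 then r (y 0) (y 1) * dt r (y 0) (y 1) * (sin (y 2))\<^sup>2 else 0)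
 else if a = 1 then (if (b = 0 \<and> c = 1) \<or> (b = 1 \<and> c = 0) then dt \<Psi> (y 0) (y 1)
   else if b = 1 \<and> c = 1 then dR \<Psi> (y 0) (y 1)
   else if b = 2 \<and> c = 2 then - (r (y 0) (y 1) * dR r (y 0) (y 1) * exp (- (2 * \<Psi> (y 0) (y 1))))
   else if b = 3 \<and> c = 3 then - (r (y 0) (y 1) * dR r (y 0) (y 1) * (sin (y 2))\<^sup>2 * exp (- (2 * \<Psi> (y 0) (y 1))))
   else 0)
 else if a = 2 then (if (b = 0 \<and> c = 2) \<or> (b = 2 \<and> c = 0) then dt r (y 0) (y 1) / r (y 0) (y 1)
   else if (b = 1 \<and> c = 2) \<or> (b = 2 \<and> c = 1) then dR r (y 0) (y 1) / r (y 0) (y 1)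
   else if b = 3 \<and> c = 3 then - (sin (y 2) * cos (y 2)) else 0)
 else if a = 3 then (if (b = 0 \<and> c = 3) \<or> (b = 3 \<and> c = 0) then dt r (y 0) (y 1) / r (y 0) (y 1)
   else if (b = 1 \<and> c = 3) \<or> (b = 3 \<and> c = 1) then dR r (y 0) (y 1) / r (y 0) (y 1)
   else if (b = 2 \<and> c = 3) \<or> (b = 3 \<and> c = 2) then cos (y 2) / sin (y 2) else 0)
 else 0)"

lemma UU_sin: "y \<in> UU T Rb \<Longrightarrow> sin (y 2) > 0"
  by (simp add: UU_def sin_gt_zero)

lemma chr_g0: assumes y: "y \<in> UU T Rb" and abc: "a < 4" "b < 4" "c < 4"
  shows "christoffel g0 y a b c = chrE a b c y"
proof -
  have r0: "r (y 0) (y (Suc 0)) \<noteq> 0" using rpos[OF UUI[OF y]] by simp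
  have s0: "sin (y 2) \<noteq> 0" using UU_sin[OF y] by simp
  have A: "a = 0 \<or> a = 1 \<or> a = 2 \<or> a = 3" using abc by arith
  have B: "b = 0 \<or> b = 1 \<or> b = 2 \<or> b = 3" using abc by arith
  have C: "c = 0 \<or> c = 1 \<or> c = 2 \<or> c = 3" using abc by arith
  show ?thesis
    using A B C
    apply (elim disjE) apply (simp_all add: chr_diag[OF g0_diag] sph_metric_def pd_def dgs y chrE_def r0 s0)
    apply (simp_all add: field_simps power2_eq_square exp_minus r0 s0)
    done
qed

lemma pd_chr: "x \<in> UU T Rb \<Longrightarrow> a < 4 \<Longrightarrow> b < 4 \<Longrightarrow> c < 4 \<Longrightarrow>
   pd k (\<lambda>y. christoffel g0 y a b c) x = pd k (\<lambda>y. chrE a b c y) x"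
  by (rule pd_cong_UU[of x T Rb]) (auto simp: chr_g0)

lemma D1: "(t,R) \<in> I2 T Rb \<Longrightarrow> deriv (\<lambda>s. dt r t s / r t s) R = (dR (dt r) t R * r t R - dt r t R * dR r t R) / (r t R)\<^sup>2"
  by (rule DERIV_imp_deriv) (auto intro!: derivative_eq_intros hdR sm simp: rpos power2_eq_square dest: rpos)
lemma D2: "deriv (\<lambda>s. dt \<Psi> s R) t = dt (dt \<Psi>) t R" by (simp add: dt_def)
lemma D3: "(t,R) \<in> I2 T Rb \<Longrightarrow> deriv (\<lambda>s. dt r s R / r s R) t = (dt (dt r) t R * r t R - dt r t R * dt r t R) / (r t R)\<^sup>2"
  by (rule DERIV_imp_deriv) (auto intro!: derivative_eq_intros hdt sm simp: rpos power2_eq_square dest: rpos)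
lemma D4: "(t,R) \<in> I2 T Rb \<Longrightarrow> deriv (\<lambda>s. dR r t s / r t s) R = (dR (dR r) t R * r t R - dR r t R * dR r t R) / (r t R)\<^sup>2"
  by (rule DERIV_imp_deriv) (auto intro!: derivative_eq_intros hdR sm simp: rpos power2_eq_square dest: rpos)
lemma D5: "deriv (\<lambda>s. dR \<Psi> t s) R = dR (dR \<Psi>) t R" by (simp add: dR_def)
lemma D6: "(t,R) \<in> I2 T Rb \<Longrightarrow> deriv (\<lambda>s. dt \<Psi> s R * exp (2 * \<Psi> s R)) t = dt (dt \<Psi>) t R * exp (2 * \<Psi> t R) + dt \<Psi> t R * (2 * dt \<Psi> t R * exp (2 * \<Psi> t R))"
  by (rule DERIV_imp_deriv) (auto intro!: derivative_eq_intros hdt sm)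
lemma D7: "(t,R) \<in> I2 T Rb \<Longrightarrow> deriv (\<lambda>s. r s R * dt r s R) t = dt r t R * dt r t R + r t R * dt (dt r) t R"
  by (rule DERIV_imp_deriv) (auto intro!: derivative_eq_intros hdt sm)
lemma D8: "(t,R) \<in> I2 T Rb \<Longrightarrow> deriv (\<lambda>s. - (r t s * dR r t s * exp (- (2 * \<Psi> t s)))) R =
   - ((dR r t R * dR r t R + r t R * dR (dR r) t R) * exp (- (2 * \<Psi> t R)) - r t R * dR r t R * (2 * dR \<Psi> t R) * exp (- (2 * \<Psi> t R)))"
  by (rule DERIV_imp_deriv) (auto intro!: derivative_eq_intros hdR sm simp: algebra_simps)
lemma D9: "0 < th \<Longrightarrow> th < pi \<Longrightarrow> deriv (\<lambda>s. cos s / sin s) th = - 1 / (sin th)\<^sup>2"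
proof -
  assume a: "0 < th" "th < pi"
  then have s: "sin th > 0" by (simp add: sin_gt_zero)
  have e: "cos th * cos th + sin th * sin th = 1" by (simp add: sin_cos_squared_add3)
  have q: "cos th * (cos th * (sin th * sin th)) + sin th * (sin th * (sin th * sin th)) = sin th * sin th"
    using e by algebra
  show ?thesis
    using s by (intro DERIV_imp_deriv) (auto intro!: derivative_eq_intros simp: power2_eq_square field_simps q e)
qed

lemma UU_th: "x \<in> UU T Rb \<Longrightarrow> 0 < x 2 \<and> x 2 < pi" by (simp add: UU_def)

lemmas Ds = D1 D2 D3 D4 D5 D6 D7 D8

lemma ric00: assumes x: "x \<in> UU T Rb"
  shows "ricci g0 x 0 0 = - dt (dt \<Psi>) (x 0) (x 1) - (dt \<Psi> (x 0) (x 1))\<^sup>2 - 2 * dt (dt r) (x 0) (x 1) / r (x 0) (x 1)"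
proof -
  have r0: "r (x 0) (x (Suc 0)) \<noteq> 0" using rpos[OF UUI[OF x]] by simp
  show ?thesis
    apply (simp add: ricci_def sum4 chr_g0 pd_chr x)
    apply (simp add: chrE_def pd_def Ds UUI[OF x] D9 UU_th[OF x])
    apply (simp add: field_simps power2_eq_square r0)
    done
qed

lemma ric01: assumes x: "x \<in> UU T Rb"
  shows "ricci g0 x 0 1 = 2 * (dR r (x 0) (x 1) * dt \<Psi> (x 0) (x 1) - dR (dt r) (x 0) (x 1)) / r (x 0) (x 1)"
proof -
  have r0: "r (x 0) (x (Suc 0)) \<noteq> 0" using rpos[OF UUI[OF x]] by simp
  show ?thesis
    apply (simp add: ricci_def sum4 chr_g0 pd_chr x)
    apply (simp add: chrE_def pd_def Ds UUI[OF x] D9 UU_th[OF x])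
    apply (simp add: field_simps power2_eq_square r0)
    done
qed

lemma ric11: assumes x: "x \<in> UU T Rb"
  shows "ricci g0 x 1 1 = exp (2 * \<Psi> (x 0) (x 1)) * (dt (dt \<Psi>) (x 0) (x 1) + (dt \<Psi> (x 0) (x 1))\<^sup>2
     + 2 * dt \<Psi> (x 0) (x 1) * dt r (x 0) (x 1) / r (x 0) (x 1))
     - 2 * dR (dR r) (x 0) (x 1) / r (x 0) (x 1) + 2 * dR \<Psi> (x 0) (x 1) * dR r (x 0) (x 1) / r (x 0) (x 1)"
proof -
  have r0: "r (x 0) (x (Suc 0)) \<noteq> 0" using rpos[OF UUI[OF x]] by simp
  show ?thesis
    apply (simp add: ricci_def sum4 chr_g0 pd_chr x)
    apply (simp add: chrE_def pd_def Ds UUI[OF x] D9 UU_th[OF x])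
    apply (simp add: field_simps power2_eq_square r0)
    done
qed

lemma ric22: assumes x: "x \<in> UU T Rb"
  shows "ricci g0 x 2 2 = r (x 0) (x 1) * dt (dt r) (x 0) (x 1) + (dt r (x 0) (x 1))\<^sup>2
     + r (x 0) (x 1) * dt r (x 0) (x 1) * dt \<Psi> (x 0) (x 1) + 1
     - exp (- (2 * \<Psi> (x 0) (x 1))) * (r (x 0) (x 1) * dR (dR r) (x 0) (x 1) + (dR r (x 0) (x 1))\<^sup>2
         - r (x 0) (x 1) * dR r (x 0) (x 1) * dR \<Psi> (x 0) (x 1))"
proof -
  have r0: "r (x 0) (x (Suc 0)) \<noteq> 0" using rpos[OF UUI[OF x]] by simp
  have s0: "sin (x 2) \<noteq> 0" using UU_sin[OF x] by simp
  show ?thesis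
    apply (simp add: ricci_def sum4 chr_g0 pd_chr x)
    apply (simp add: chrE_def pd_def Ds UUI[OF x] D9 UU_th[OF x])
    apply (simp add: field_simps power2_eq_square r0 s0 sin_squared_eq)
    done
qed

end

lemma alg1: "(c::real) \<noteq> 0 \<Longrightarrow> y \<noteq> 0 \<Longrightarrow> ((x/c)*(y/c) - (z/c)^2)/((y/c)^2) = (x*y - z*z)/y^2"
  by (simp add: field_simps power2_eq_square)

definition PP :: "real \<Rightarrow> real \<Rightarrow> pt" where
  "PP t R = (\<lambda>i. if i = 0 then t else if i = 1 then R else if i = 2 then pi/2 else 0)"

lemma PP_simps[simp]: "PP t R 0 = t" "PP t R (Suc 0) = R" "PP t R 1 = R" "PP t R 2 = pi/2"
  by (simp_all add: PP_def)

lemma PP_UU: "(t,R) \<in> I2 T Rb \<Longrightarrow> PP t R \<in> UU T Rb"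
  by (simp add: I2_def UU_def)

definition CC :: "ereal \<Rightarrow> real \<Rightarrow> (real \<times> real) set" where
  "CC T Rb = {(t,R). 0 \<le> t \<and> ereal t < T \<and> 0 \<le> R \<and> R \<le> Rb}"

lemma ext_eq:
  fixes F G :: "real \<times> real \<Rightarrow> real"
  assumes cF: "continuous_on (CC T Rb) F" and cG: "continuous_on (CC T Rb) G"
    and eq: "\<And>p. p \<in> I2 T Rb \<Longrightarrow> F p = G p" and p: "p \<in> CC T Rb" and Rb: "0 < Rb"
  shows "F p = G p"
proof -
  obtain t R where pe: "p = (t,R)" by (cases p)
  have tR: "0 \<le> t" "ereal t < T" "0 \<le> R" "R \<le> Rb" using p pe by (auto simp: CC_def)
  obtain t1 where t1: "ereal t < ereal t1" "ereal t1 < T" using ereal_dense2[OF tR(2)] by blast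
  have tt1: "t < t1" using t1(1) by simp
  define w where "w k = inverse (real (Suc k)) / 2" for k
  have w0: "0 < w k" "w k < 1" for k
  proof -
    have "inverse (real (Suc k)) \<le> 1" by (simp add: field_simps)
    then show "0 < w k" "w k < 1" by (auto simp: w_def)
  qed
  have wlim: "w \<longlonglongrightarrow> 0"
    unfolding w_def using tendsto_divide[OF LIMSEQ_inverse_real_of_nat tendsto_const[of 2]] by simp
  define s where "s k = (t + (t1 - t) * w k, R + (Rb/2 - R) * w k)" for k
  have sI: "s k \<in> I2 T Rb" for k
  proof -
    have a: "t < t + (t1 - t) * w k" using tt1 w0[of k] by simp
    have b: "t + (t1 - t) * w k < t1"
    proof -
      have "(t1 - t) * w k < (t1 - t) * 1" using tt1 w0[of k] by (intro mult_strict_left_mono) auto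
      then show ?thesis by simp
    qed
    have c: "0 < R + (Rb/2 - R) * w k"
    proof -
      have "R + (Rb/2 - R) * w k = (1 - w k) * R + w k * (Rb/2)" by (simp add: algebra_simps)
      moreover have "0 \<le> (1 - w k) * R" using w0[of k] tR by simp
      moreover have "0 < w k * (Rb/2)" using w0[of k] Rb by simp
      ultimately show ?thesis by linarith
    qed
    have d: "R + (Rb/2 - R) * w k < Rb"
    proof -
      have "R + (Rb/2 - R) * w k = (1 - w k) * R + w k * (Rb/2)" by (simp add: algebra_simps)
      moreover have "(1 - w k) * R \<le> (1 - w k) * Rb" using w0[of k] tR by (intro mult_left_mono) auto
      moreover have "w k * (Rb/2) < w k * Rb" using w0[of k] Rb by simp
      ultimately show ?thesis by (simp add: algebra_simps)
    qed
    have e0: "ereal (t + (t1 - t) * w k) < ereal t1" using b by simp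
    have e: "ereal (t + (t1 - t) * w k) < T" using e0 t1(2) by (rule less_trans)
    show ?thesis using a c d e tR by (simp add: s_def I2_def)
  qed
  have sC: "s k \<in> CC T Rb" for k using sI[of k] by (auto simp: I2_def CC_def)
  have slim: "s \<longlonglongrightarrow> p"
  proof -
    have "(\<lambda>k. t + (t1 - t) * w k) \<longlonglongrightarrow> t + (t1 - t) * 0"
      by (intro tendsto_intros wlim)
    moreover have "(\<lambda>k. R + (Rb/2 - R) * w k) \<longlonglongrightarrow> R + (Rb/2 - R) * 0"
      by (intro tendsto_intros wlim)
    ultimately show ?thesis unfolding s_def pe by (auto intro!: tendsto_Pair)
  qed
  have "(F \<circ> s) \<longlonglongrightarrow> F p" using cF p sC slim by (auto simp: continuous_on_sequentially)
  moreover have "(G \<circ> s) \<longlonglongrightarrow> G p" using cG p sC slim by (auto simp: continuous_on_sequentially)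
  moreover have "F \<circ> s = G \<circ> s" using eq sI by (simp add: fun_eq_iff)
  ultimately show ?thesis using LIMSEQ_unique by metis
qed

locale ctx =
  fixes \<Phi> \<Psi> r \<rho> n \<phi> :: "real \<Rightarrow> real \<Rightarrow> real"
    and T :: ereal and Rb \<sigma> :: real
  assumes T_pos: "0 < T" and Rb_pos: "0 < Rb" and sigma_pos: "0 < \<sigma>"
    and cont: "\<forall>f\<in>{\<Phi>, \<Psi>, r, \<rho>, n, \<phi>}.
        continuous_on {(t,R). 0 \<le> t \<and> ereal t < T \<and> 0 \<le> R \<and> R \<le> Rb} (\<lambda>(t,R). f t R)"
    and smooth: "\<forall>f\<in>{\<Phi>, \<Psi>, r, \<rho>, n, \<phi>}.
        smooth2 {(t,R). 0 < t \<and> ereal t < T \<and> 0 < R \<and> R < Rb} f"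
    and r_pos: "\<And>t R. 0 \<le> t \<Longrightarrow> ereal t < T \<Longrightarrow> 0 < R \<Longrightarrow> R < Rb \<Longrightarrow> 0 < r t R"
    and norm_Phi: "\<And>t. 0 \<le> t \<Longrightarrow> ereal t < T \<Longrightarrow> \<Phi> t Rb = 0"
    and norm_r: "\<And>R. 0 \<le> R \<Longrightarrow> R < Rb \<Longrightarrow> r 0 R = R"
    and rho_nz: "\<And>t R. 0 \<le> t \<Longrightarrow> ereal t < T \<Longrightarrow> 0 \<le> R \<Longrightarrow> R < Rb \<Longrightarrow> \<rho> t R \<noteq> 0"
    and n_nz: "\<And>t R. 0 \<le> t \<Longrightarrow> ereal t < T \<Longrightarrow> 0 \<le> R \<Longrightarrow> R < Rb \<Longrightarrow> n t R \<noteq> 0"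
    and eqs: "\<And>x. 0 < x 0 \<Longrightarrow> ereal (x 0) < T \<Longrightarrow> 0 < x 1 \<Longrightarrow> x 1 < Rb \<Longrightarrow>
        0 < x 2 \<Longrightarrow> x 2 < pi \<Longrightarrow>
        divergence (sph_metric \<Phi> \<Psi> r) (\<lambda>y \<mu>. lift \<rho> y * (\<lambda>x \<mu>. if \<mu> = 0 then exp (- \<Phi> (x 0) (x 1)) else 0) y \<mu>) x = \<sigma> * lift n x
      \<and> (\<forall>\<nu><4. lift \<rho> x * (\<Sum>m<4. (\<lambda>x \<mu>. if \<mu> = 0 then exp (- \<Phi> (x 0) (x 1)) else 0) x m * cov_deriv (sph_metric \<Phi> \<Psi> r) (\<lambda>x \<mu>. if \<mu> = 0 then exp (- \<Phi> (x 0) (x 1)) else 0) x m \<nu>) = 0)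
      \<and> divergence (sph_metric \<Phi> \<Psi> r) (\<lambda>y \<mu>. lift n y * (\<lambda>x \<mu>. if \<mu> = 0 then exp (- \<Phi> (x 0) (x 1)) else 0) y \<mu>) x = 0
      \<and> (\<forall>\<mu><4. \<forall>\<nu><4. ricci (sph_metric \<Phi> \<Psi> r) x \<mu> \<nu> - (1/2) * (sph_metric \<Phi> \<Psi> r) x \<mu> \<nu> * scalar_curv (sph_metric \<Phi> \<Psi> r) x + lift \<phi> x * (sph_metric \<Phi> \<Psi> r) x \<mu> \<nu>
              = lift \<rho> x * lower (sph_metric \<Phi> \<Psi> r) (\<lambda>x \<mu>. if \<mu> = 0 then exp (- \<Phi> (x 0) (x 1)) else 0) x \<mu> * lower (sph_metric \<Phi> \<Psi> r) (\<lambda>x \<mu>. if \<mu> = 0 then exp (- \<Phi> (x 0) (x 1)) else 0) x \<nu>)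
      \<and> (\<forall>\<nu><4. pd \<nu> (lift \<phi>) x = \<sigma> * (lift n x * lower (sph_metric \<Phi> \<Psi> r) (\<lambda>x \<mu>. if \<mu> = 0 then exp (- \<Phi> (x 0) (x 1)) else 0) x \<nu>))"
begin

abbreviation "gg \<equiv> sph_metric \<Phi> \<Psi> r"
abbreviation "uu \<equiv> (\<lambda>x \<mu>. if \<mu> = 0 then exp (- \<Phi> (x 0) (x 1)) else 0)"

lemma I2_eq: "{(t,R). 0 < t \<and> ereal t < T \<and> 0 < R \<and> R < Rb} = I2 T Rb"
  by (simp add: I2_def)

lemma sm_all: "smooth2 (I2 T Rb) \<Phi>" "smooth2 (I2 T Rb) \<Psi>" "smooth2 (I2 T Rb) r"
   "smooth2 (I2 T Rb) \<rho>" "smooth2 (I2 T Rb) n" "smooth2 (I2 T Rb) \<phi>"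
  using smooth by (simp_all add: I2_eq)

lemma I2D: "(t,R) \<in> I2 T Rb \<Longrightarrow> 0 < t \<and> ereal t < T \<and> 0 < R \<and> R < Rb"
  by (simp add: I2_def)

sublocale S: sph \<Psi> r T Rb
  by unfold_locales (use sm_all in auto, use r_pos in \<open>auto dest!: I2D\<close>)

lemma Phi_R: assumes tR: "(t,R) \<in> I2 T Rb" shows "dR \<Phi> t R = 0"
proof -
  have x: "PP t R \<in> UU T Rb" using PP_UU[OF tR] .
  from eqs[of "PP t R"] x have e: "lift \<rho> (PP t R) * (\<Sum>m<4. uu (PP t R) m * cov_deriv gg uu (PP t R) m 1) = 0"
    by (auto simp: UU_def)
  have rho0: "\<rho> t R \<noteq> 0" using rho_nz tR by (auto simp: I2_def)
  have df: "deriv (\<lambda>s. - exp (2 * \<Phi> t s)) R = - (2 * dR \<Phi> t R * exp (2 * \<Phi> t R))"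
      by (rule DERIV_imp_deriv) (auto intro!: derivative_eq_intros S.hdR[OF sm_all(1) tR])
  have c: "christoffel gg (PP t R) 1 0 0 = dR \<Phi> t R * exp (2 * \<Phi> t R) / exp (2 * \<Psi> t R)"
    by (subst chr_diag) (simp_all add: sph_metric_def pd_def df)
  have "(\<Sum>m<4. uu (PP t R) m * cov_deriv gg uu (PP t R) m 1) =
     exp (- \<Phi> t R) * exp (- \<Phi> t R) * christoffel gg (PP t R) 1 0 0"
    by (simp add: sum4 cov_deriv_def pd_const)
  then show ?thesis using e rho0 c by (simp add: lift_def)
qed


lemma ext_eq2:
  fixes F G :: "real \<times> real \<Rightarrow> real"
  assumes cF: "continuous_on (CC T Rb) F" and cG: "continuous_on (CC T Rb) G"
    and eq: "\<And>t R. (t,R) \<in> I2 T Rb \<Longrightarrow> F (t,R) = G (t,R)" and p: "p \<in> CC T Rb"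
  shows "F p = G p"
  by (rule ext_eq[OF cF cG _ p Rb_pos]) (metis eq prod.collapse)

lemma contC: "f \<in> {\<Phi>, \<Psi>, r, \<rho>, n, \<phi>} \<Longrightarrow> continuous_on (CC T Rb) (\<lambda>(t,R). f t R)"
  using cont unfolding CC_def by blast

lemma cont_comp: assumes f: "f \<in> {\<Phi>, \<Psi>, r, \<rho>, n, \<phi>}"
  and h: "continuous_on A h1" "continuous_on A h2" and m: "\<And>p. p \<in> A \<Longrightarrow> (h1 p, h2 p) \<in> CC T Rb"
  shows "continuous_on A (\<lambda>p. f (h1 p) (h2 p))"
proof -
  have "continuous_on A (\<lambda>p. (\<lambda>(t,R). f t R) (h1 p, h2 p))"
    by (rule continuous_on_compose2[OF contC[OF f]]) (auto intro!: continuous_intros h m)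
  then show ?thesis by simp
qed

lemma slice_R: "f \<in> {\<Phi>, \<Psi>, r, \<rho>, n, \<phi>} \<Longrightarrow> 0 \<le> t \<Longrightarrow> ereal t < T \<Longrightarrow> 0 \<le> a \<Longrightarrow> b \<le> Rb \<Longrightarrow> continuous_on {a..b} (\<lambda>s. f t s)"
  by (rule cont_comp) (auto intro!: continuous_intros simp: CC_def)

lemma slice_t: assumes f: "f \<in> {\<Phi>, \<Psi>, r, \<rho>, n, \<phi>}" and h: "0 \<le> a" "ereal b < T" "0 \<le> R" "R \<le> Rb"
  shows "continuous_on {a..b} (\<lambda>s. f s R)"
proof (rule cont_comp[OF f])
  fix p assume p: "p \<in> {a..b}"
  have "ereal p \<le> ereal b" using p by simp
  then have "ereal p < T" using h(2) by (rule order_le_less_trans)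
  then show "(p, R) \<in> CC T Rb" using p h by (auto simp: CC_def)
qed (auto intro!: continuous_intros)

lemma I2_CC: "p \<in> I2 T Rb \<Longrightarrow> p \<in> CC T Rb" by (auto simp: I2_def CC_def)

lemma Phi0: assumes p: "(t,R) \<in> CC T Rb" shows "\<Phi> t R = 0"
proof -
  have "(\<lambda>(t,R). \<Phi> t R) (t,R) = (\<lambda>p. 0) (t,R)"
  proof (rule ext_eq[OF contC _ _ p Rb_pos])
    fix q assume q: "q \<in> I2 T Rb"
    obtain t R where qe: "q = (t,R)" by (cases q)
    have tR: "0 < t" "ereal t < T" "0 < R" "R < Rb" using q qe by (auto simp: I2_def)
    have "\<Phi> t Rb = \<Phi> t R"
    proof (rule DERIV_isconst_end[OF tR(4)])
      show "continuous_on {R..Rb} (\<Phi> t)" using slice_R[of \<Phi> t R Rb] tR by simp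
      fix s assume "R < s" "s < Rb"
      then have s: "(t,s) \<in> I2 T Rb" using tR by (auto simp: I2_def)
      show "DERIV (\<Phi> t) s :> 0" using S.hdR[OF sm_all(1) s] Phi_R[OF s] by simp
    qed
    then show "(\<lambda>(t,R). \<Phi> t R) q = (\<lambda>p. 0) q" using norm_Phi tR qe by simp
  qed auto
  then show ?thesis by simp
qed


lemma dt_fold: "deriv (\<lambda>s. f s R) t = dt f t R" by (simp add: dt_def)
lemma dR_fold: "deriv (\<lambda>s. f t s) R = dR f t R" by (simp add: dR_def)

lemma UU_CC: "y \<in> UU T Rb \<Longrightarrow> (y 0, y 1) \<in> CC T Rb" by (simp add: UU_def CC_def)

lemma Phi_UU: "y \<in> UU T Rb \<Longrightarrow> \<Phi> (y 0) (y 1) = 0" "y \<in> UU T Rb \<Longrightarrow> \<Phi> (y 0) (y (Suc 0)) = 0"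
  using Phi0[OF UU_CC] by auto

lemma gg_eq3: "y \<in> UU T Rb \<Longrightarrow> gg y i j = S.g0 y i j"
  using Phi_UU by (simp add: sph_metric_def)

lemma gg_eq: "y \<in> UU T Rb \<Longrightarrow> gg y = S.g0 y"
  using Phi0[OF UU_CC] by (auto simp: sph_metric_def fun_eq_iff)

lemma uu_eq: "y \<in> UU T Rb \<Longrightarrow> uu y = (\<lambda>\<mu>. if \<mu> = 0 then 1 else 0)"
  using Phi0[OF UU_CC] by (auto simp: fun_eq_iff)

lemma chr_gg: assumes y: "y \<in> UU T Rb" shows "christoffel gg y a b c = christoffel S.g0 y a b c"
proof -
  have "pd k (\<lambda>y. gg y i j) y = pd k (\<lambda>y. S.g0 y i j) y" for k i j
    by (rule pd_cong_UU[OF y]) (simp add: gg_eq)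
  note pe = this
  show ?thesis by (simp only: christoffel_def diag_inv_def gg_eq3[OF y] pe)
qed

lemma ric_gg: assumes x: "x \<in> UU T Rb" shows "ricci gg x b c = ricci S.g0 x b c"
proof -
  have "pd k (\<lambda>y. christoffel gg y i j l) x = pd k (\<lambda>y. christoffel S.g0 y i j l) x" for k i j l
    by (rule pd_cong_UU[OF x]) (simp add: chr_gg)
  then show ?thesis unfolding ricci_def using chr_gg[OF x] by simp
qed

lemma eqsP: assumes tR: "(t,R) \<in> I2 T Rb"
  shows "divergence gg (\<lambda>y \<mu>. lift n y * uu y \<mu>) (PP t R) = 0
      \<and> (\<forall>\<mu><4. \<forall>\<nu><4. ricci gg (PP t R) \<mu> \<nu> - (1/2) * gg (PP t R) \<mu> \<nu> * scalar_curv gg (PP t R) + lift \<phi> (PP t R) * gg (PP t R) \<mu> \<nu>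
              = lift \<rho> (PP t R) * lower gg uu (PP t R) \<mu> * lower gg uu (PP t R) \<nu>)
      \<and> (\<forall>\<nu><4. pd \<nu> (lift \<phi>) (PP t R) = \<sigma> * (lift n (PP t R) * lower gg uu (PP t R) \<nu>))"
  using eqs[of "PP t R"] PP_UU[OF tR] by (auto simp: UU_def)

lemma lowerP: assumes tR: "(t,R) \<in> I2 T Rb"
  shows "lower gg uu (PP t R) 0 = -1" "lower gg uu (PP t R) 1 = 0" "lower gg uu (PP t R) 2 = 0"
  using Phi0[OF I2_CC[OF tR]] by (simp_all add: lower_def sum4 sph_metric_def)

lemma pde_n: assumes tR: "(t,R) \<in> I2 T Rb"
  shows "dt n t R + n t R * (dt \<Psi> t R + 2 * dt r t R / r t R) = 0"
proof -
  have x: "PP t R \<in> UU T Rb" using PP_UU[OF tR] .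
  have e: "divergence gg (\<lambda>y \<mu>. lift n y * uu y \<mu>) (PP t R) = 0" using eqsP[OF tR] by blast
  have p: "pd m (\<lambda>y. lift n y * uu y m) (PP t R) = pd m (\<lambda>y. lift n y * (if m = 0 then 1 else 0)) (PP t R)" for m
    by (rule pd_cong_UU[OF x]) (simp add: Phi_UU)
  have r0: "r t R \<noteq> 0" using S.rpos[OF tR] by simp
  show ?thesis using e unfolding divergence_def p
    by (simp add: sum4 chr_gg[OF x] S.chr_g0[OF x] uu_eq[OF x] S.chrE_def
        lift_def pd_def dt_fold pd_const r0 field_simps Phi0[OF I2_CC[OF tR]])
qed


lemma pde_phi: assumes tR: "(t,R) \<in> I2 T Rb"
  shows "dt \<phi> t R = - \<sigma> * n t R" "dR \<phi> t R = 0"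
proof -
  have e: "\<forall>\<nu><4. pd \<nu> (lift \<phi>) (PP t R) = \<sigma> * (lift n (PP t R) * lower gg uu (PP t R) \<nu>)"
    using eqsP[OF tR] by blast
  from e[rule_format, of 0] show "dt \<phi> t R = - \<sigma> * n t R"
    by (simp add: lowerP[OF tR] pd_def lift_def dt_fold)
  from e[rule_format, of 1] show "dR \<phi> t R = 0"
    using lowerP[OF tR] by (simp add: pd_def lift_def dR_fold)
qed

lemma ein: assumes tR: "(t,R) \<in> I2 T Rb" and m: "\<mu> < 4" "\<nu> < 4"
  shows "ricci S.g0 (PP t R) \<mu> \<nu> - (1/2) * gg (PP t R) \<mu> \<nu> * scalar_curv gg (PP t R) + \<phi> t R * gg (PP t R) \<mu> \<nu>
              = \<rho> t R * lower gg uu (PP t R) \<mu> * lower gg uu (PP t R) \<nu>"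
  using eqsP[OF tR] m ric_gg[OF PP_UU[OF tR]] by (simp add: lift_def)

lemma pde_01: assumes tR: "(t,R) \<in> I2 T Rb"
  shows "dR (dt r) t R = dR r t R * dt \<Psi> t R"
proof -
  have e: "ricci S.g0 (PP t R) 0 1 = 0"
    using ein[OF tR, of 0 1] lowerP[OF tR] by (simp add: sph_metric_def)
  have r0: "r t R \<noteq> 0" using S.rpos[OF tR] by simp
  show ?thesis using e S.ric01[OF PP_UU[OF tR]] r0 by simp
qed

lemma pde_rho: assumes tR: "(t,R) \<in> I2 T Rb"
  shows "\<rho> t R = ricci S.g0 (PP t R) 0 0 + ricci S.g0 (PP t R) 1 1 / exp (2 * \<Psi> t R)"
    and "ricci S.g0 (PP t R) 1 1 / exp (2 * \<Psi> t R) = ricci S.g0 (PP t R) 2 2 / (r t R)\<^sup>2"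
proof -
  have P0: "\<Phi> t R = 0" using Phi0[OF I2_CC[OF tR]] .
  have e0: "ricci S.g0 (PP t R) 0 0 + (1/2) * scalar_curv gg (PP t R) - \<phi> t R = \<rho> t R"
    using ein[OF tR, of 0 0] lowerP[OF tR] P0 by (simp add: sph_metric_def)
  have e1: "ricci S.g0 (PP t R) 1 1 - (1/2) * exp (2 * \<Psi> t R) * scalar_curv gg (PP t R) + \<phi> t R * exp (2 * \<Psi> t R) = 0"
    using ein[OF tR, of 1 1] lowerP[OF tR] by (simp add: sph_metric_def)
  have e2: "ricci S.g0 (PP t R) 2 2 - (1/2) * (r t R)\<^sup>2 * scalar_curv gg (PP t R) + \<phi> t R * (r t R)\<^sup>2 = 0"
    using ein[OF tR, of 2 2] lowerP[OF tR] by (simp add: sph_metric_def)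
  have r0: "r t R \<noteq> 0" using S.rpos[OF tR] by simp
  have q1: "ricci S.g0 (PP t R) 1 1 / exp (2 * \<Psi> t R) = (1/2) * scalar_curv gg (PP t R) - \<phi> t R"
    using e1 by (simp add: field_simps)
  have q2: "ricci S.g0 (PP t R) 2 2 / (r t R)\<^sup>2 = (1/2) * scalar_curv gg (PP t R) - \<phi> t R"
    using e2 r0 by (simp add: field_simps)
  show "\<rho> t R = ricci S.g0 (PP t R) 0 0 + ricci S.g0 (PP t R) 1 1 / exp (2 * \<Psi> t R)"
    using e0 q1 by simp
  show "ricci S.g0 (PP t R) 1 1 / exp (2 * \<Psi> t R) = ricci S.g0 (PP t R) 2 2 / (r t R)\<^sup>2"
    using q1 q2 by simp
qed


abbreviation "R0 \<equiv> Rb / 2"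

lemma R0_I2: "0 < t \<Longrightarrow> ereal t < T \<Longrightarrow> (t, R0) \<in> I2 T Rb"
  using Rb_pos by (simp add: I2_def)

lemma ev_t: assumes "0 < t" "ereal t < T" shows "eventually (\<lambda>s. 0 < s \<and> ereal s < T) (nhds t)"
proof -
  have o: "open ({0<..} \<inter> {s::real. ereal s < T})"
    by (intro open_Int open_greaterThan ereal_open_lt)
  have "t \<in> {0<..} \<inter> {s::real. ereal s < T}" using assms by auto
  from eventually_nhds_in_open[OF o this] show ?thesis by eventually_elim auto
qed

lemma ev_R: assumes "0 < R" "R < Rb" shows "eventually (\<lambda>s. 0 < s \<and> s < Rb) (nhds R)"
proof -
  have o: "open {0<..<Rb}" by simp
  have "R \<in> {0<..<Rb}" using assms by auto
  from eventually_nhds_in_open[OF o this] show ?thesis by eventually_elim auto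
qed

lemma dt_cong: assumes "0 < t" "ereal t < T" "\<And>s. 0 < s \<Longrightarrow> ereal s < T \<Longrightarrow> f s R = h s"
  shows "dt f t R = deriv h t"
  unfolding dt_def by (rule deriv_cong_ev[OF _ refl]) (use ev_t[OF assms(1,2)] assms(3) in \<open>auto elim: eventually_mono\<close>)

lemma dR_cong: assumes "0 < R" "R < Rb" "\<And>s. 0 < s \<Longrightarrow> s < Rb \<Longrightarrow> f t s = h s"
  shows "dR f t R = deriv h R"
  unfolding dR_def by (rule deriv_cong_ev[OF _ refl]) (use ev_R[OF assms(1,2)] assms(3) in \<open>auto elim: eventually_mono\<close>)

lemma phi_hom: assumes tR: "(t,R) \<in> I2 T Rb" shows "\<phi> t R = \<phi> t R0"
proof (rule DERIV_isconst3[of 0 Rb R R0 "\<phi> t"])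
  show "0 < Rb" using Rb_pos .
  show "R \<in> {0<..<Rb}" "R0 \<in> {0<..<Rb}" using tR Rb_pos by (auto simp: I2_def)
  fix s assume "s \<in> {0<..<Rb}"
  then have s: "(t,s) \<in> I2 T Rb" using tR by (auto simp: I2_def)
  show "DERIV (\<phi> t) s :> 0" using S.hdR[OF sm_all(6) s] pde_phi(2)[OF s] by simp
qed

lemma dtphi_hom: assumes tR: "(t,R) \<in> I2 T Rb" shows "dt \<phi> t R = dt \<phi> t R0"
proof -
  have t: "0 < t" "ereal t < T" using tR by (auto simp: I2_def)
  have "dt \<phi> t R = deriv (\<lambda>s. \<phi> s R0) t"
    by (rule dt_cong[OF t]) (use tR in \<open>auto simp: I2_def intro: phi_hom\<close>)
  also have "\<dots> = dt \<phi> t R0" by (simp add: dt_def)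
  finally show ?thesis .
qed

lemma n_hom1: assumes tR: "(t,R) \<in> I2 T Rb" shows "n t R = n t R0"
proof -
  have t: "0 < t" "ereal t < T" using tR by (auto simp: I2_def)
  have 0: "(t,R0) \<in> I2 T Rb" using R0_I2 t by simp
  show ?thesis using dtphi_hom[OF tR] pde_phi(1)[OF tR] pde_phi(1)[OF 0] sigma_pos by simp
qed

lemma n_hom2: assumes tR: "(t,R) \<in> I2 T Rb" shows "dt n t R = dt n t R0"
proof -
  have t: "0 < t" "ereal t < T" using tR by (auto simp: I2_def)
  have "dt n t R = deriv (\<lambda>s. n s R0) t"
    by (rule dt_cong[OF t]) (use tR in \<open>auto simp: I2_def intro: n_hom1\<close>)
  then show ?thesis by (simp add: dt_def)
qed

lemma homC: assumes f: "f \<in> {\<Phi>, \<Psi>, r, \<rho>, n, \<phi>}" and h: "\<And>t R. (t,R) \<in> I2 T Rb \<Longrightarrow> f t R = f t R0"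
  and p: "(t,R) \<in> CC T Rb" shows "f t R = f t R0"
proof -
  have "(\<lambda>(t,R). f t R) (t,R) = (\<lambda>p. f (fst p) R0) (t,R)"
  proof (rule ext_eq[OF contC[OF f] _ _ p Rb_pos])
    show "continuous_on (CC T Rb) (\<lambda>p. f (fst p) R0)"
      by (rule cont_comp[OF f]) (auto intro!: continuous_intros simp: CC_def Rb_pos less_imp_le)
  qed (auto simp: h)
  then show ?thesis by simp
qed

lemma K_hom: assumes tR: "(t,R) \<in> I2 T Rb"
  shows "dt n t R * (r t R)^3 + 3 * n t R * (r t R)^2 * dt r t R = dt n t R0 * (r t R0)^3 + 3 * n t R0 * (r t R0)^2 * dt r t R0"
proof -
  define f where "f s = dt n t R0 * (r t s)^3 + 3 * n t R0 * (r t s)^2 * dt r t s" for s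
  have "f R = f R0"
  proof (rule DERIV_isconst3[of 0 Rb R R0 f])
    show "0 < Rb" using Rb_pos .
    show "R \<in> {0<..<Rb}" "R0 \<in> {0<..<Rb}" using tR Rb_pos by (auto simp: I2_def)
    fix s assume "s \<in> {0<..<Rb}"
    then have s: "(t,s) \<in> I2 T Rb" using tR by (auto simp: I2_def)
    have d: "DERIV f s :> dt n t R0 * (3 * (r t s)^2 * dR r t s) + 3 * n t R0 * (2 * r t s * dR r t s * dt r t s + (r t s)^2 * dR (dt r) t s)"
      unfolding f_def
      by (auto intro!: derivative_eq_intros S.hdR[OF _ s] S.sm simp: algebra_simps power2_eq_square power3_eq_cube)
    have r0: "r t s \<noteq> 0" using S.rpos[OF s] by simp
    have e1: "r t s * dt n t s + n t s * r t s * dt \<Psi> t s + 2 * n t s * dt r t s = 0"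
      using pde_n[OF s] r0 by (simp add: field_simps)
    have "dt n t R0 * (3 * (r t s)^2 * dR r t s) + 3 * n t R0 * (2 * r t s * dR r t s * dt r t s + (r t s)^2 * dR (dt r) t s)
       = 3 * r t s * dR r t s * (r t s * dt n t s + n t s * r t s * dt \<Psi> t s + 2 * n t s * dt r t s)"
      using n_hom1[OF s] n_hom2[OF s] pde_01[OF s] by (simp add: algebra_simps power2_eq_square)
    then show "DERIV f s :> 0" using d e1 by simp
  qed
  then show ?thesis unfolding f_def using n_hom1[OF tR] n_hom2[OF tR] by simp
qed

lemma T0: "ereal 0 < T" using T_pos by (simp add: zero_ereal_def)

lemma n0_hom: assumes "0 \<le> R" "R \<le> Rb" shows "n 0 R = n 0 R0"
  by (rule homC[of n]) (auto intro: n_hom1 simp: CC_def assms T0)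

lemma lt_T: "s < t \<Longrightarrow> ereal t < T \<Longrightarrow> ereal s < T"
proof -
  assume "s < t" "ereal t < T"
  moreover have "ereal s < ereal t" using \<open>s < t\<close> by simp
  ultimately show ?thesis using less_trans by blast
qed

lemma A_I: assumes tR: "(t,R) \<in> I2 T Rb"
  shows "n t R0 * ((r t R)^3 - (r t R0)^3) = n 0 R0 * (R^3 - R0^3)"
proof -
  have t: "0 < t" "ereal t < T" and R: "0 < R" "R < Rb" using tR by (auto simp: I2_def)
  define h where "h s = n s R * (r s R)^3 - n s R0 * (r s R0)^3" for s
  have "h t = h 0"
  proof (rule DERIV_isconst_end[OF t(1)])
    show "continuous_on {0..t} h" unfolding h_def
      using R Rb_pos t by (auto intro!: continuous_intros slice_t)
    fix s assume s: "0 < s" "s < t"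
    have st: "ereal s < T" using lt_T s(2) t(2) by blast
    have sR: "(s,R) \<in> I2 T Rb" and sR0: "(s,R0) \<in> I2 T Rb" using s st R Rb_pos by (auto simp: I2_def)
    have d: "DERIV h s :> (dt n s R * (r s R)^3 + 3 * n s R * (r s R)^2 * dt r s R) - (dt n s R0 * (r s R0)^3 + 3 * n s R0 * (r s R0)^2 * dt r s R0)"
      unfolding h_def
      by (auto intro!: derivative_eq_intros S.hdt[OF _ sR] S.hdt[OF _ sR0] sm_all simp: algebra_simps power2_eq_square power3_eq_cube)
    then show "DERIV h s :> 0" using K_hom[OF sR] by simp
  qed
  moreover have "r 0 R = R" "r 0 R0 = R0" using norm_r R Rb_pos by auto
  ultimately show ?thesis unfolding h_def using n_hom1[OF tR] n0_hom[of R] R by (simp add: algebra_simps)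
qed

lemma B_I: assumes tR: "(t,R) \<in> I2 T Rb"
  shows "exp (\<Psi> t R) * (r t R)^2 * n t R0 = exp (\<Psi> 0 R) * R^2 * n 0 R0"
proof -
  have t: "0 < t" "ereal t < T" and R: "0 < R" "R < Rb" using tR by (auto simp: I2_def)
  define h where "h s = exp (\<Psi> s R) * (r s R)^2 * n s R" for s
  have "h t = h 0"
  proof (rule DERIV_isconst_end[OF t(1)])
    show "continuous_on {0..t} h" unfolding h_def
      using R Rb_pos t by (auto intro!: continuous_intros slice_t)
    fix s assume s: "0 < s" "s < t"
    have st: "ereal s < T" using lt_T s(2) t(2) by blast
    have sR: "(s,R) \<in> I2 T Rb" using s st R Rb_pos by (auto simp: I2_def)
    have d: "DERIV h s :> exp (\<Psi> s R) * r s R * (r s R * dt n s R + n s R * r s R * dt \<Psi> s R + 2 * n s R * dt r s R)"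
      unfolding h_def
      by (auto intro!: derivative_eq_intros S.hdt[OF _ sR] sm_all simp: algebra_simps power2_eq_square)
    have r0: "r s R \<noteq> 0" using S.rpos[OF sR] by simp
    have e1: "r s R * dt n s R + n s R * r s R * dt \<Psi> s R + 2 * n s R * dt r s R = 0"
      using pde_n[OF sR] r0 by (simp add: field_simps)
    show "DERIV h s :> 0" using d e1 by simp
  qed
  moreover have "r 0 R = R" using norm_r R by auto
  ultimately show ?thesis unfolding h_def using n_hom1[OF tR] n0_hom[of R] R by simp
qed

lemma cC1: "f \<in> {\<Phi>, \<Psi>, r, \<rho>, n, \<phi>} \<Longrightarrow> continuous_on (CC T Rb) (\<lambda>p. f (fst p) (snd p))"
  by (rule cont_comp) (auto intro!: continuous_intros)
lemma cC2: "f \<in> {\<Phi>, \<Psi>, r, \<rho>, n, \<phi>} \<Longrightarrow> 0 \<le> c \<Longrightarrow> c \<le> Rb \<Longrightarrow> continuous_on (CC T Rb) (\<lambda>p. f (fst p) c)"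
  by (rule cont_comp) (auto intro!: continuous_intros simp: CC_def)
lemma cC3: "f \<in> {\<Phi>, \<Psi>, r, \<rho>, n, \<phi>} \<Longrightarrow> continuous_on (CC T Rb) (\<lambda>p. f 0 (snd p))"
  by (rule cont_comp) (auto intro!: continuous_intros simp: CC_def T0)

lemma R0_le: "0 \<le> R0" "R0 \<le> Rb" "R0 < Rb" "0 < R0" using Rb_pos by auto

lemma A_C: assumes p: "(t,R) \<in> CC T Rb"
  shows "n t R0 * ((r t R)^3 - (r t R0)^3) = n 0 R0 * (R^3 - R0^3)"
proof -
  have "(\<lambda>p. n (fst p) R0 * ((r (fst p) (snd p))^3 - (r (fst p) R0)^3)) (t,R) = (\<lambda>p. n 0 R0 * ((snd p)^3 - R0^3)) (t,R)"
  proof (rule ext_eq2[OF _ _ _ p])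
    show "continuous_on (CC T Rb) (\<lambda>p. n (fst p) R0 * ((r (fst p) (snd p))^3 - (r (fst p) R0)^3))"
      by (intro continuous_on_mult continuous_on_diff continuous_on_power cC1 cC2 R0_le) auto
    show "continuous_on (CC T Rb) (\<lambda>p. n 0 R0 * ((snd p)^3 - R0^3))"
      by (intro continuous_on_mult continuous_on_diff continuous_on_power continuous_on_const continuous_on_snd continuous_on_id)
  qed (simp add: A_I)
  then show ?thesis by simp
qed

lemma B_C: assumes p: "(t,R) \<in> CC T Rb"
  shows "exp (\<Psi> t R) * (r t R)^2 * n t R0 = exp (\<Psi> 0 R) * R^2 * n 0 R0"
proof -
  have "(\<lambda>p. exp (\<Psi> (fst p) (snd p)) * (r (fst p) (snd p))^2 * n (fst p) R0) (t,R) = (\<lambda>p. exp (\<Psi> 0 (snd p)) * (snd p)^2 * n 0 R0) (t,R)"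
  proof (rule ext_eq2[OF _ _ _ p])
    show "continuous_on (CC T Rb) (\<lambda>p. exp (\<Psi> (fst p) (snd p)) * (r (fst p) (snd p))^2 * n (fst p) R0)"
      by (intro continuous_on_mult continuous_on_exp continuous_on_power cC1 cC2 R0_le) auto
    show "continuous_on (CC T Rb) (\<lambda>p. exp (\<Psi> 0 (snd p)) * (snd p)^2 * n 0 R0)"
      by (intro continuous_on_mult continuous_on_exp continuous_on_power continuous_on_const continuous_on_snd continuous_on_id cC3) auto
  qed (simp add: B_I)
  then show ?thesis by simp
qed

lemma nR0_nz: "0 \<le> t \<Longrightarrow> ereal t < T \<Longrightarrow> n t R0 \<noteq> 0"
  using n_nz R0_le by auto

lemma r_center: assumes "0 \<le> t" "ereal t < T" shows "r t 0 = 0"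
proof -
  have "(t,0) \<in> CC T Rb" using assms Rb_pos by (simp add: CC_def)
  from B_C[OF this] nR0_nz[OF assms] show ?thesis by simp
qed

lemma N_rel: assumes "0 \<le> t" "ereal t < T" shows "n t R0 * (r t R0)^3 = n 0 R0 * R0^3"
proof -
  have "(t,0) \<in> CC T Rb" using assms Rb_pos by (simp add: CC_def)
  from A_C[OF this] r_center[OF assms] show ?thesis by (simp add: algebra_simps)
qed

definition a :: "real \<Rightarrow> real" where "a t = r t R0 / R0"

lemma a_pos: "0 \<le> t \<Longrightarrow> ereal t < T \<Longrightarrow> 0 < a t"
  using r_pos[of t R0] R0_le by (simp add: a_def)

lemma n0_eq: assumes "0 \<le> t" "ereal t < T" shows "n 0 R0 = n t R0 * (a t)^3"
proof -
  have r0: "r t R0 = a t * R0" using R0_le by (simp add: a_def)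
  have "(n t R0 * (a t)^3) * R0^3 = n 0 R0 * R0^3" using N_rel[OF assms] unfolding r0 by (metis mult.assoc power_mult_distrib)
  moreover have c: "R0^3 \<noteq> 0" using R0_le by simp
  ultimately have "n t R0 * (a t)^3 = n 0 R0" using mult_right_cancel[OF c] by blast
  then show ?thesis by simp
qed

lemma r_lin: assumes "0 \<le> t" "ereal t < T" "0 \<le> R" "R < Rb" shows "r t R = a t * R"
proof -
  have p: "(t,R) \<in> CC T Rb" using assms by (simp add: CC_def)
  have N: "n t R0 \<noteq> 0" using nR0_nz assms by simp
  have r0: "r t R0 = a t * R0" using R0_le by (simp add: a_def)
  have "n t R0 * (r t R)^3 = n 0 R0 * R^3" using A_C[OF p] N_rel[OF assms(1,2)] by (simp add: algebra_simps)
  also have "n 0 R0 = n t R0 * (a t)^3" using n0_eq[OF assms(1,2)] .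
  finally have "(r t R)^3 = (a t * R)^3" using N by (simp add: power_mult_distrib)
  moreover have "0 \<le> r t R"
  proof (cases "R = 0")
    case True then show ?thesis using r_center assms by simp
  next
    case False then show ?thesis using r_pos[of t R] assms by simp
  qed
  moreover have "0 \<le> a t * R" using a_pos[OF assms(1,2)] assms by simp
  ultimately show ?thesis using power_eq_iff_eq_base[of 3 "r t R" "a t * R"] by simp
qed

lemma psi_I: assumes tR: "(t,R) \<in> I2 T Rb" shows "exp (\<Psi> t R) = exp (\<Psi> 0 R) * a t"
proof -
  have h: "0 \<le> t" "ereal t < T" "0 < R" "R < Rb" using tR by (auto simp: I2_def)
  have N: "n t R0 \<noteq> 0" using nR0_nz h by simp
  have A: "a t \<noteq> 0" using a_pos h by force
  have r0: "r t R0 = a t * R0" using R0_le by (simp add: a_def)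
  have n0: "n 0 R0 = n t R0 * (a t)^3" using n0_eq[OF h(1,2)] .
  have "exp (\<Psi> t R) * (a t * R)^2 * n t R0 = exp (\<Psi> 0 R) * R^2 * (n t R0 * (a t)^3)"
    using B_I[OF tR] r_lin[of t R] h n0 by simp
  then have "(a t)^2 * R^2 * n t R0 * exp (\<Psi> t R) = (a t)^2 * R^2 * n t R0 * (exp (\<Psi> 0 R) * a t)"
    by (simp add: algebra_simps power_mult_distrib power3_eq_cube power2_eq_square)
  then show ?thesis using N A h by simp
qed

lemma psi_C: assumes p: "(t,R) \<in> CC T Rb" shows "exp (\<Psi> t R) = exp (\<Psi> 0 R) * a t"
proof -
  have "(\<lambda>p. exp (\<Psi> (fst p) (snd p))) (t,R) = (\<lambda>p. exp (\<Psi> 0 (snd p)) * (r (fst p) R0 / R0)) (t,R)"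
  proof (rule ext_eq2[OF _ _ _ p])
    show "continuous_on (CC T Rb) (\<lambda>p. exp (\<Psi> (fst p) (snd p)))"
      by (intro continuous_on_exp cC1) auto
    show "continuous_on (CC T Rb) (\<lambda>p. exp (\<Psi> 0 (snd p)) * (r (fst p) R0 / R0))"
      using Rb_pos by (intro continuous_on_mult continuous_on_exp continuous_on_divide continuous_on_const cC2 cC3 R0_le) auto
  qed (simp add: psi_I a_def)
  then show ?thesis by (simp add: a_def)
qed

definition A1 :: "real \<Rightarrow> real" where "A1 t = dt r t R0 / R0"
definition A2 :: "real \<Rightarrow> real" where "A2 t = dt (dt r) t R0 / R0"

lemma I2_t: "(t,R) \<in> I2 T Rb \<Longrightarrow> 0 < s \<Longrightarrow> ereal s < T \<Longrightarrow> (s,R) \<in> I2 T Rb"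
  by (simp add: I2_def)
lemma I2_R: "(t,R) \<in> I2 T Rb \<Longrightarrow> 0 < s \<Longrightarrow> s < Rb \<Longrightarrow> (t,s) \<in> I2 T Rb"
  by (simp add: I2_def)
lemma I2_tR0: "(t,R) \<in> I2 T Rb \<Longrightarrow> (t,R0) \<in> I2 T Rb"
  using R0_le by (simp add: I2_def)

lemma r_linI: "(t,R) \<in> I2 T Rb \<Longrightarrow> r t R = a t * R"
  by (rule r_lin) (auto simp: I2_def)

lemma rl2: assumes tR: "(t,R) \<in> I2 T Rb" shows "dt r t R = A1 t * R"
proof -
  have t: "0 < t" "ereal t < T" using tR by (auto simp: I2_def)
  have "dt r t R = deriv (\<lambda>s. r s R0 / R0 * R) t"
    by (rule dt_cong[OF t]) (use tR in \<open>auto simp: r_linI[OF I2_t] a_def\<close>)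
  also have "\<dots> = dt r t R0 / R0 * R"
    using Rb_pos by (intro DERIV_imp_deriv) (auto intro!: derivative_eq_intros S.hdt[OF _ I2_tR0[OF tR]] S.sm)
  finally show ?thesis by (simp add: A1_def)
qed

lemma rl3: assumes tR: "(t,R) \<in> I2 T Rb" shows "dt (dt r) t R = A2 t * R"
proof -
  have t: "0 < t" "ereal t < T" using tR by (auto simp: I2_def)
  have "dt (dt r) t R = deriv (\<lambda>s. dt r s R0 / R0 * R) t"
    by (rule dt_cong[OF t]) (use tR in \<open>auto simp: rl2[OF I2_t] A1_def\<close>)
  also have "\<dots> = dt (dt r) t R0 / R0 * R"
    using Rb_pos by (intro DERIV_imp_deriv) (auto intro!: derivative_eq_intros S.hdt[OF _ I2_tR0[OF tR]] S.sm)
  finally show ?thesis by (simp add: A2_def)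
qed

lemma rl4: assumes tR: "(t,R) \<in> I2 T Rb" shows "dR r t R = a t" "dR (dR r) t R = 0"
proof -
  have R: "0 < R" "R < Rb" using tR by (auto simp: I2_def)
  have "dR r t R = deriv (\<lambda>s. a t * s) R"
    by (rule dR_cong[OF R]) (use tR in \<open>auto simp: r_linI[OF I2_R]\<close>)
  then show "dR r t R = a t" by simp
  have "dR (dR r) t R = deriv (\<lambda>s. a t) R"
  proof (rule dR_cong[OF R])
    fix s assume "0 < s" "s < Rb"
    then have ts: "(t,s) \<in> I2 T Rb" using I2_R[OF tR] by simp
    have "dR r t s = deriv (\<lambda>s. a t * s) s"
      by (rule dR_cong) (use ts in \<open>auto simp: r_linI[OF I2_R] I2_def\<close>)
    then show "dR r t s = a t" by simp
  qed
  then show "dR (dR r) t R = 0" by simp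
qed

lemma psi_ln: assumes tR: "(t,R) \<in> I2 T Rb" shows "\<Psi> t R = \<Psi> 0 R + ln (r t R0 / R0)"
proof -
  have "exp (\<Psi> t R) = exp (\<Psi> 0 R) * a t" using psi_C I2_CC[OF tR] by simp
  moreover have "0 < a t" using a_pos tR by (auto simp: I2_def)
  ultimately have "\<Psi> t R = ln (exp (\<Psi> 0 R) * a t)" by (metis ln_exp)
  also have "\<dots> = \<Psi> 0 R + ln (a t)" using \<open>0 < a t\<close> by (simp add: ln_mult)
  finally show ?thesis by (simp add: a_def)
qed

lemma rl6: assumes tR: "(t,R) \<in> I2 T Rb" shows "dt \<Psi> t R = A1 t / a t"
proof -
  have t: "0 < t" "ereal t < T" using tR by (auto simp: I2_def)
  have rp: "0 < r t R0" using S.rpos[OF I2_tR0[OF tR]] .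
  have "dt \<Psi> t R = deriv (\<lambda>s. \<Psi> 0 R + ln (r s R0 / R0)) t"
    by (rule dt_cong[OF t]) (use tR in \<open>auto simp: psi_ln[OF I2_t]\<close>)
  also have "\<dots> = dt r t R0 / R0 / (r t R0 / R0)"
    using rp R0_le
    by (intro DERIV_imp_deriv) (auto intro!: derivative_eq_intros S.hdt[OF _ I2_tR0[OF tR]] S.sm)
  finally show ?thesis by (simp add: A1_def a_def)
qed

lemma rl7: assumes tR: "(t,R) \<in> I2 T Rb" shows "dt (dt \<Psi>) t R = (A2 t * a t - (A1 t)^2) / (a t)^2"
proof -
  have t: "0 < t" "ereal t < T" using tR by (auto simp: I2_def)
  have rp: "0 < r t R0" using S.rpos[OF I2_tR0[OF tR]] .
  have "dt (dt \<Psi>) t R = deriv (\<lambda>s. dt r s R0 / r s R0) t"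
    by (rule dt_cong[OF t]) (use tR R0_le in \<open>auto simp: rl6[OF I2_t] A1_def a_def\<close>)
  also have "\<dots> = (dt (dt r) t R0 * r t R0 - dt r t R0 * dt r t R0) / (r t R0)\<^sup>2"
    by (rule S.D3[OF I2_tR0[OF tR]])
  finally show ?thesis using R0_le rp alg1[of R0 "r t R0" "dt (dt r) t R0" "dt r t R0"] by (simp add: A1_def A2_def a_def)
qed

lemma key_I: assumes tR: "(t,R) \<in> I2 T Rb"
  shows "R * dR \<Psi> t R = (exp (\<Psi> 0 R))^2 - 1"
proof -
  have x: "PP t R \<in> UU T Rb" using PP_UU[OF tR] .
  have h: "0 < t" "ereal t < T" "0 < R" "R < Rb" using tR by (auto simp: I2_def)
  have ap: "0 < a t" using a_pos h by simp
  have E2: "exp (2 * \<Psi> t R) = (exp (\<Psi> 0 R))^2 * (a t)^2"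
    using psi_C[OF I2_CC[OF tR]] by (simp add: exp_double power_mult_distrib)
  have Em: "exp (- (2 * \<Psi> t R)) = 1 / ((exp (\<Psi> 0 R))^2 * (a t)^2)"
    using E2 by (simp add: exp_minus field_simps)
  have eq: "ricci S.g0 (PP t R) 1 1 / exp (2 * \<Psi> t R) = ricci S.g0 (PP t R) 2 2 / (r t R)\<^sup>2"
    using pde_rho(2)[OF tR] .
  have eq2: "((exp (\<Psi> 0 R))^2 * (a t)^2 * ((A2 t * a t - (A1 t)^2) / (a t)^2 + (A1 t / a t)^2
     + 2 * (A1 t / a t) * (A1 t * R) / (a t * R)) - 2 * 0 / (a t * R) + 2 * dR \<Psi> t R * a t / (a t * R))
      / ((exp (\<Psi> 0 R))^2 * (a t)^2)
    = ((a t * R) * (A2 t * R) + (A1 t * R)^2 + (a t * R) * (A1 t * R) * (A1 t / a t) + 1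
       - 1 / ((exp (\<Psi> 0 R))^2 * (a t)^2) * ((a t * R) * 0 + (a t)^2 - (a t * R) * a t * dR \<Psi> t R)) / (a t * R)^2"
    using eq unfolding S.ric11[OF x] S.ric22[OF x]
    by (simp add: E2 Em rl2[OF tR] rl3[OF tR] rl4[OF tR] rl6[OF tR] rl7[OF tR] r_linI[OF tR])
  have pol: "(R * (a t)^6 * (exp (\<Psi> 0 R))^2) * (1 + R * dR \<Psi> t R) = (R * (a t)^6 * (exp (\<Psi> 0 R))^2) * (exp (\<Psi> 0 R))^2"
    using eq2 ap h by (simp add: field_simps power2_eq_square eval_nat_numeral)
  have c: "R * (a t)^6 * (exp (\<Psi> 0 R))^2 \<noteq> 0" using ap h by simp
  have "1 + R * dR \<Psi> t R = (exp (\<Psi> 0 R))^2" using mult_left_cancel[OF c] pol by blast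
  then show ?thesis by simp
qed

definition t0 :: real where "t0 = (SOME t. 0 < t \<and> ereal t < T)"

lemma t0_prop: "0 < t0" "ereal t0 < T"
proof -
  obtain z where "ereal 0 < ereal z" "ereal z < T" using ereal_dense2[OF T0] by blast
  then have "\<exists>t. 0 < t \<and> ereal t < T" by auto
  then have "0 < t0 \<and> ereal t0 < T" unfolding t0_def by (rule someI_ex)
  then show "0 < t0" "ereal t0 < T" by auto
qed

definition kk :: real where "kk = (1 - exp (- (2 * \<Psi> 0 R0))) / R0^2"

lemma V_t0: assumes "0 < s" "s < Rb" shows "(a t0)^2 * exp (- (2 * \<Psi> t0 s)) = exp (- (2 * \<Psi> 0 s))"
proof -
  have p: "(t0, s) \<in> CC T Rb" using assms t0_prop by (simp add: CC_def)
  have ap: "0 < a t0" using a_pos t0_prop by simp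
  have "exp (\<Psi> t0 s) = exp (\<Psi> 0 s) * a t0" using psi_C[OF p] .
  then have "exp (2 * \<Psi> t0 s) = (exp (\<Psi> 0 s))^2 * (a t0)^2" by (simp add: exp_double power_mult_distrib)
  then show ?thesis using ap by (simp add: exp_minus exp_double field_simps)
qed

lemma k_const: assumes "0 < R" "R < Rb" shows "(1 - exp (- (2 * \<Psi> 0 R))) / R^2 = kk"
proof -
  define f where "f s = (1 - (a t0)^2 * exp (- (2 * \<Psi> t0 s))) / s^2" for s
  have "f R = f R0"
  proof (rule DERIV_isconst3[of 0 Rb R R0 f])
    show "0 < Rb" using Rb_pos .
    show "R \<in> {0<..<Rb}" "R0 \<in> {0<..<Rb}" using assms Rb_pos by auto
    fix s assume "s \<in> {0<..<Rb}"
    then have s: "(t0,s) \<in> I2 T Rb" using t0_prop by (auto simp: I2_def)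
    have s0: "0 < s" using s by (simp add: I2_def)
    define u where "u = (a t0)^2 * exp (- (2 * \<Psi> t0 s))"
    have d: "DERIV f s :> ((a t0)^2 * exp (- (2 * \<Psi> t0 s)) * (2 * dR \<Psi> t0 s) * s^2 - (1 - (a t0)^2 * exp (- (2 * \<Psi> t0 s))) * (2 * s)) / (s^2)^2"
      unfolding f_def using s0
      by (auto intro!: derivative_eq_intros S.hdR[OF _ s] S.sm simp: power2_eq_square algebra_simps)
    have key: "s * dR \<Psi> t0 s = (exp (\<Psi> 0 s))^2 - 1" using key_I[OF s] .
    have uu: "u = 1 / (exp (\<Psi> 0 s))^2"
      using V_t0[of s] s0 s a_pos[of t0] t0_prop unfolding u_def by (simp add: I2_def exp_minus exp_double field_simps)
    have "u * (2 * dR \<Psi> t0 s) * s^2 - (1 - u) * (2 * s) = 2 * s * (u * (s * dR \<Psi> t0 s) - (1 - u))"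
      by (simp add: algebra_simps power2_eq_square)
    also have "\<dots> = 0" unfolding key uu by (simp add: field_simps)
    finally have z: "u * (2 * dR \<Psi> t0 s) * s^2 - (1 - u) * (2 * s) = 0" .
    show "DERIV f s :> 0"
      by (rule DERIV_cong[OF d]) (use z in \<open>simp add: u_def\<close>)
  qed
  moreover have "f R = (1 - exp (- (2 * \<Psi> 0 R))) / R^2" using V_t0[OF assms] by (simp add: f_def)
  moreover have "f R0 = kk" using V_t0[of R0] R0_le by (simp add: f_def kk_def)
  ultimately show ?thesis by simp
qed

lemma V_C: assumes "0 \<le> R" "R < Rb" shows "exp (- (2 * \<Psi> 0 R)) = 1 - kk * R^2"
proof -
  have p: "(0, R) \<in> CC T Rb" using assms T0 by (simp add: CC_def)
  have c1: "continuous_on (CC T Rb) (\<lambda>p. exp (- (2 * \<Psi> 0 (snd p))))"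
    by (intro continuous_on_exp continuous_on_minus continuous_on_mult continuous_on_const cC3) auto
  have c2: "continuous_on (CC T Rb) (\<lambda>p. 1 - kk * (snd p)^2)"
    by (intro continuous_on_diff continuous_on_mult continuous_on_power continuous_on_const continuous_on_snd continuous_on_id)
  have e: "(\<lambda>p. exp (- (2 * \<Psi> 0 (snd p)))) (t,R') = (\<lambda>p. 1 - kk * (snd p)^2) (t,R')" if "(t,R') \<in> I2 T Rb" for t R'
  proof -
    have "0 < R'" "R' < Rb" using that by (auto simp: I2_def)
    from k_const[OF this] show ?thesis using \<open>0 < R'\<close> by (simp add: field_simps)
  qed
  show ?thesis using ext_eq2[OF c1 c2 e p] by simp
qed

lemma rho_I: assumes tR: "(t,R) \<in> I2 T Rb"
  shows "\<rho> t R = - 2 * A2 t / a t + 2 * (A1 t)^2 / (a t)^2 + 2 * kk / (a t)^2"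
proof -
  have x: "PP t R \<in> UU T Rb" using PP_UU[OF tR] .
  have h: "0 < t" "ereal t < T" "0 < R" "R < Rb" using tR by (auto simp: I2_def)
  have ap: "0 < a t" using a_pos h by simp
  define w where "w = (exp (\<Psi> 0 R))^2"
  have wp: "0 < w" by (simp add: w_def)
  have E2: "exp (2 * \<Psi> t R) = w * (a t)^2"
    using psi_C[OF I2_CC[OF tR]] by (simp add: exp_double power_mult_distrib w_def)
  have key: "R * dR \<Psi> t R = w - 1" using key_I[OF tR] by (simp add: w_def)
  have V: "w * (1 - kk * R^2) = 1"
    using V_C[of R] h by (simp add: w_def exp_minus exp_double field_simps)
  have r00: "ricci S.g0 (PP t R) 0 0 = - 3 * A2 t / a t"
    unfolding S.ric00[OF x] using ap h
    by (simp add: rl2[OF tR] rl3[OF tR] rl4[OF tR] rl6[OF tR] rl7[OF tR] r_linI[OF tR] field_simps power2_eq_square)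
  have r11: "ricci S.g0 (PP t R) 1 1 / exp (2 * \<Psi> t R) = A2 t / a t + 2 * (A1 t)^2 / (a t)^2 + 2 * (R * dR \<Psi> t R) / (R^2 * w * (a t)^2)"
    unfolding S.ric11[OF x] using ap h wp
    by (simp add: E2 rl2[OF tR] rl3[OF tR] rl4[OF tR] rl6[OF tR] rl7[OF tR] r_linI[OF tR] field_simps power2_eq_square)
  have sp: "2 * (R * dR \<Psi> t R) / (R^2 * w * (a t)^2) = 2 * kk / (a t)^2"
  proof -
    have w1: "w - 1 = w * kk * R^2" using V by (simp add: algebra_simps)
    show ?thesis unfolding key w1 using ap h wp by (simp add: field_simps power2_eq_square)
  qed
  have "\<rho> t R = - 3 * A2 t / a t + (A2 t / a t + 2 * (A1 t)^2 / (a t)^2 + 2 * kk / (a t)^2)"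
    using pde_rho(1)[OF tR] unfolding r00 r11 sp .
  moreover have "- 3 * A2 t / a t + A2 t / a t = - 2 * A2 t / a t" using ap by (simp add: field_simps)
  ultimately show ?thesis by linarith
qed

lemma rho_hom: assumes tR: "(t,R) \<in> I2 T Rb" shows "\<rho> t R = \<rho> t R0"
  using rho_I[OF tR] rho_I[OF I2_tR0[OF tR]] by simp

lemma final:
  shows "(\<exists>f1 f2 f3 :: real \<Rightarrow> real. \<forall>t R. 0 \<le> t \<and> ereal t < T \<and> 0 \<le> R \<and> R < Rb \<longrightarrow>
            \<rho> t R = f1 t \<and> n t R = f2 t \<and> \<phi> t R = f3 t)
       \<and> (\<exists>(a :: real \<Rightarrow> real) (k :: real).
            (\<forall>t. 0 \<le> t \<and> ereal t < T \<longrightarrow> 0 < a t)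
          \<and> (\<forall>x. 0 \<le> x 0 \<and> ereal (x 0) < T \<and> 0 \<le> x 1 \<and> x 1 < Rb \<longrightarrow>
               0 < 1 - k * (x 1)\<^sup>2
             \<and> (\<forall>i<4. \<forall>j<4. gg x i j = frw_metric a k x i j)
             \<and> (\<forall>\<mu><4. uu x \<mu> = (if \<mu> = 0 then 1 else 0))))"
proof
  show "\<exists>f1 f2 f3 :: real \<Rightarrow> real. \<forall>t R. 0 \<le> t \<and> ereal t < T \<and> 0 \<le> R \<and> R < Rb \<longrightarrow>
            \<rho> t R = f1 t \<and> n t R = f2 t \<and> \<phi> t R = f3 t"
  proof (intro exI allI impI)
    fix t R assume h: "0 \<le> t \<and> ereal t < T \<and> 0 \<le> R \<and> R < Rb"
    then have p: "(t,R) \<in> CC T Rb" by (simp add: CC_def)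
    show "\<rho> t R = \<rho> t R0 \<and> n t R = n t R0 \<and> \<phi> t R = \<phi> t R0"
      using homC[of \<rho>, OF _ rho_hom p] homC[of n, OF _ n_hom1 p] homC[of \<phi>, OF _ phi_hom p] by simp
  qed
next
  show "\<exists>(a :: real \<Rightarrow> real) (k :: real).
            (\<forall>t. 0 \<le> t \<and> ereal t < T \<longrightarrow> 0 < a t)
          \<and> (\<forall>x. 0 \<le> x 0 \<and> ereal (x 0) < T \<and> 0 \<le> x 1 \<and> x 1 < Rb \<longrightarrow>
               0 < 1 - k * (x 1)\<^sup>2
             \<and> (\<forall>i<4. \<forall>j<4. gg x i j = frw_metric a k x i j)
             \<and> (\<forall>\<mu><4. uu x \<mu> = (if \<mu> = 0 then 1 else 0)))"
  proof -
  have A: "\<forall>t. 0 \<le> t \<and> ereal t < T \<longrightarrow> 0 < a t" using a_pos by simp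
  have B: "\<forall>x. 0 \<le> x 0 \<and> ereal (x 0) < T \<and> 0 \<le> x 1 \<and> x 1 < Rb \<longrightarrow>
               0 < 1 - kk * (x 1)\<^sup>2
             \<and> (\<forall>i<4. \<forall>j<4. gg x i j = frw_metric a kk x i j)
             \<and> (\<forall>\<mu><4. uu x \<mu> = (if \<mu> = 0 then 1 else 0))"
  proof (intro allI impI)
    fix x :: pt assume h: "0 \<le> x 0 \<and> ereal (x 0) < T \<and> 0 \<le> x 1 \<and> x 1 < Rb"
    have p: "(x 0, x 1) \<in> CC T Rb" using h by (simp add: CC_def)
    have V: "exp (- (2 * \<Psi> 0 (x 1))) = 1 - kk * (x 1)^2" using V_C h by simp
    have G1: "0 < 1 - kk * (x 1)\<^sup>2" using V[symmetric] by simp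
    have P: "\<Phi> (x 0) (x 1) = 0" using Phi0[OF p] .
    have rl: "r (x 0) (x 1) = a (x 0) * x 1" using r_lin h by simp
    have ps: "exp (\<Psi> (x 0) (x 1)) = exp (\<Psi> 0 (x 1)) * a (x 0)" using psi_C[OF p] .
    have e2: "exp (2 * \<Psi> (x 0) (x 1)) = (a (x 0))^2 / (1 - kk * (x 1)^2)"
    proof -
      have "exp (2 * \<Psi> (x 0) (x 1)) = (exp (\<Psi> 0 (x 1)))^2 * (a (x 0))^2"
        using ps by (simp add: exp_double power_mult_distrib)
      also have "(exp (\<Psi> 0 (x 1)))^2 = 1 / exp (- (2 * \<Psi> 0 (x 1)))"
        by (simp add: exp_minus exp_double divide_inverse)
      also have "\<dots> = 1 / (1 - kk * (x 1)^2)" unfolding V ..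
      finally show ?thesis by simp
    qed
    have G2: "\<forall>i<4. \<forall>j<4. gg x i j = frw_metric a kk x i j"
    proof (intro allI impI)
      fix i j :: nat assume "i < 4" "j < 4"
      then have "i = 0 \<or> i = 1 \<or> i = 2 \<or> i = 3" "j = 0 \<or> j = 1 \<or> j = 2 \<or> j = 3" by arith+
      then show "gg x i j = frw_metric a kk x i j"
        by (elim disjE) (simp_all add: sph_metric_def frw_metric_def P rl e2 power_mult_distrib
            P[unfolded One_nat_def] rl[unfolded One_nat_def] e2[unfolded One_nat_def])
    qed
    have G3: "\<forall>\<mu><4. uu x \<mu> = (if \<mu> = 0 then 1 else 0)" using P by simp
    show "0 < 1 - kk * (x 1)\<^sup>2
             \<and> (\<forall>i<4. \<forall>j<4. gg x i j = frw_metric a kk x i j)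
             \<and> (\<forall>\<mu><4. uu x \<mu> = (if \<mu> = 0 then 1 else 0))" using G1 G2 G3 by blast
  qed
  show ?thesis using A B by blast
  qed
qed

end

theorem mainTheorem1:
  fixes \<Phi> \<Psi> r \<rho> n \<phi> :: "real \<Rightarrow> real \<Rightarrow> real"
    and T :: ereal and Rb \<sigma> :: real
  defines "g \<equiv> sph_metric \<Phi> \<Psi> r"
    and "u \<equiv> (\<lambda>x \<mu>. if \<mu> = 0 then exp (- \<Phi> (x 0) (x 1)) else 0)"
  assumes T_pos: "0 < T" and Rb_pos: "0 < Rb" and sigma_pos: "0 < \<sigma>"
    and cont: "\<forall>f\<in>{\<Phi>, \<Psi>, r, \<rho>, n, \<phi>}.
        continuous_on {(t,R). 0 \<le> t \<and> ereal t < T \<and> 0 \<le> R \<and> R \<le> Rb} (\<lambda>(t,R). f t R)"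
    and smooth: "\<forall>f\<in>{\<Phi>, \<Psi>, r, \<rho>, n, \<phi>}.
        smooth2 {(t,R). 0 < t \<and> ereal t < T \<and> 0 < R \<and> R < Rb} f"
    and r_pos: "\<And>t R. 0 \<le> t \<Longrightarrow> ereal t < T \<Longrightarrow> 0 < R \<Longrightarrow> R < Rb \<Longrightarrow> 0 < r t R"
    and norm_Phi: "\<And>t. 0 \<le> t \<Longrightarrow> ereal t < T \<Longrightarrow> \<Phi> t Rb = 0"
    and norm_r: "\<And>R. 0 \<le> R \<Longrightarrow> R < Rb \<Longrightarrow> r 0 R = R"
    and rho_nz: "\<And>t R. 0 \<le> t \<Longrightarrow> ereal t < T \<Longrightarrow> 0 \<le> R \<Longrightarrow> R < Rb \<Longrightarrow> \<rho> t R \<noteq> 0"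
    and n_nz: "\<And>t R. 0 \<le> t \<Longrightarrow> ereal t < T \<Longrightarrow> 0 \<le> R \<Longrightarrow> R < Rb \<Longrightarrow> n t R \<noteq> 0"
    and eqs: "\<And>x. 0 < x 0 \<Longrightarrow> ereal (x 0) < T \<Longrightarrow> 0 < x 1 \<Longrightarrow> x 1 < Rb \<Longrightarrow>
        0 < x 2 \<Longrightarrow> x 2 < pi \<Longrightarrow>
        divergence g (\<lambda>y \<mu>. lift \<rho> y * u y \<mu>) x = \<sigma> * lift n x
      \<and> (\<forall>\<nu><4. lift \<rho> x * (\<Sum>m<4. u x m * cov_deriv g u x m \<nu>) = 0)
      \<and> divergence g (\<lambda>y \<mu>. lift n y * u y \<mu>) x = 0
      \<and> (\<forall>\<mu><4. \<forall>\<nu><4. ricci g x \<mu> \<nu> - (1/2) * g x \<mu> \<nu> * scalar_curv g x + lift \<phi> x * g x \<mu> \<nu>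
              = lift \<rho> x * lower g u x \<mu> * lower g u x \<nu>)
      \<and> (\<forall>\<nu><4. pd \<nu> (lift \<phi>) x = \<sigma> * (lift n x * lower g u x \<nu>))"
  shows "(\<exists>f1 f2 f3 :: real \<Rightarrow> real. \<forall>t R. 0 \<le> t \<and> ereal t < T \<and> 0 \<le> R \<and> R < Rb \<longrightarrow>
            \<rho> t R = f1 t \<and> n t R = f2 t \<and> \<phi> t R = f3 t)
       \<and> (\<exists>(a :: real \<Rightarrow> real) (k :: real).
            (\<forall>t. 0 \<le> t \<and> ereal t < T \<longrightarrow> 0 < a t)
          \<and> (\<forall>x. 0 \<le> x 0 \<and> ereal (x 0) < T \<and> 0 \<le> x 1 \<and> x 1 < Rb \<longrightarrow>
               0 < 1 - k * (x 1)\<^sup>2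
             \<and> (\<forall>i<4. \<forall>j<4. g x i j = frw_metric a k x i j)
             \<and> (\<forall>\<mu><4. u x \<mu> = (if \<mu> = 0 then 1 else 0))))"
proof -
  interpret C: ctx \<Phi> \<Psi> r \<rho> n \<phi> T Rb \<sigma>
    by unfold_locales (use T_pos Rb_pos sigma_pos cont smooth r_pos norm_Phi norm_r rho_nz n_nz eqs in \<open>simp_all add: g_def u_def\<close>)
  show ?thesis unfolding g_def u_def by (rule C.final)
qed

end
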